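(* Let $\mathcal H_{AB}=\mathcal H_A\otimes\mathcal H_B$ be finite dimensional and define, for full-rank $\rho_{AB},\sigma_{AB}\in\mathcal S_{AB}$, $D^E_A(\rho_{AB}\|\sigma_{AB}):=D(\rho_{AB}\|\mathbb E^*_A(\rho_{AB}))$. Then for all such $\rho_{AB},\sigma_{AB}$: (1) $\rho_{AB}\mapsto D^E_A(\rho_{AB}\|\sigma_{AB})$ is continuous; (2) $D^E_A(\rho_{AB}\|\sigma_{AB})\ge0$, with equality iff $\rho_{AB}=\mathbb E^*_A(\rho_{AB})$; (3) $D^E_A(\rho_{AB}\|\sigma_A\otimes\sigma_B)\ge D(\rho_A\|\sigma_A)$; (3.1) $D^E_A(\rho_A\otimes\rho_B\|\sigma_A\otimes\sigma_B)=D(\rho_A\|\sigma_A)$.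
   Context: $D(\rho\|\sigma)=\operatorname{tr}[\rho(\log\rho-\log\sigma)]$. Reduced states $\rho_B=\operatorname{tr}_A\rho_{AB}$, and operators on one factor are tensored with the identity on the other when multiplied with operators on $AB$. $\mathbb E^*_A(\rho_{AB}) := \sigma_{AB}^{1/2}\,(\mathbb 1_A\otimes\sigma_B^{-1/2}\rho_B\sigma_B^{-1/2})\,\sigma_{AB}^{1/2}$ (depending on the fixed full-rank state $\sigma_{AB}$). *)

theory Defs
  imports "HOL-Analysis.Analysis"
begin

type_synonym 'n cmat = "complex^'n^'n"

definition adj :: "'n::finite cmat \<Rightarrow> 'n cmat" where
  "adj A = (\<chi> i j. cnj (A $ j $ i))"

definition hermitian :: "'n::finite cmat \<Rightarrow> bool" where
  "hermitian A \<longleftrightarrow> adj A = A"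

definition unitary :: "'n::finite cmat \<Rightarrow> bool" where
  "unitary U \<longleftrightarrow> U ** adj U = mat 1 \<and> adj U ** U = mat 1"

definition qform :: "'n::finite cmat \<Rightarrow> complex^'n \<Rightarrow> complex" where
  "qform A x = (\<Sum>i\<in>UNIV. \<Sum>j\<in>UNIV. cnj (x $ i) * A $ i $ j * x $ j)"

definition pos_def :: "'n::finite cmat \<Rightarrow> bool" where
  "pos_def A \<longleftrightarrow> hermitian A \<and> (\<forall>x. x \<noteq> 0 \<longrightarrow> Im (qform A x) = 0 \<and> Re (qform A x) > 0)"

definition full_rank_state :: "'n::finite cmat \<Rightarrow> bool" where
  "full_rank_state \<rho> \<longleftrightarrow> pos_def \<rho> \<and> trace \<rho> = 1"

definition rdiag :: "('n::finite \<Rightarrow> real) \<Rightarrow> 'n cmat" where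
  "rdiag d = (\<chi> i j. if i = j then complex_of_real (d i) else 0)"

text \<open>Functional calculus for Hermitian matrices via the spectral decomposition
  (the result is independent of the chosen decomposition).\<close>
definition mfun :: "(real \<Rightarrow> real) \<Rightarrow> 'n::finite cmat \<Rightarrow> 'n cmat" where
  "mfun f A = (SOME B. \<exists>U d. unitary U \<and> A = U ** rdiag d ** adj U
                         \<and> B = U ** rdiag (f \<circ> d) ** adj U)"

definition mlog :: "'n::finite cmat \<Rightarrow> 'n cmat" where
  "mlog A = mfun ln A"

definition msqrt :: "'n::finite cmat \<Rightarrow> 'n cmat" where
  "msqrt A = mfun sqrt A"

definition minvsqrt :: "'n::finite cmat \<Rightarrow> 'n cmat" where
  "minvsqrt A = mfun (\<lambda>x. 1 / sqrt x) A"

text \<open>Umegaki relative entropy D(rho||sigma) = tr[rho (log rho - log sigma)]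
  (real-valued for the full-rank states considered).\<close>
definition rel_ent :: "'n::finite cmat \<Rightarrow> 'n cmat \<Rightarrow> real" where
  "rel_ent \<rho> \<sigma> = Re (trace (\<rho> ** (mlog \<rho> - mlog \<sigma>)))"

definition kron :: "'a::finite cmat \<Rightarrow> 'b::finite cmat \<Rightarrow> ('a \<times> 'b) cmat" where
  "kron A B = (\<chi> p q. A $ fst p $ fst q * B $ snd p $ snd q)"

text \<open>rho_B = tr_A rho_AB\<close>
definition ptrA :: "('a::finite \<times> 'b::finite) cmat \<Rightarrow> 'b cmat" where
  "ptrA \<rho> = (\<chi> j l. \<Sum>i\<in>UNIV. \<rho> $ (i,j) $ (i,l))"

text \<open>rho_A = tr_B rho_AB\<close>
definition ptrB :: "('a::finite \<times> 'b::finite) cmat \<Rightarrow> 'a cmat" where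
  "ptrB \<rho> = (\<chi> i k. \<Sum>j\<in>UNIV. \<rho> $ (i,j) $ (k,j))"

definition Estar :: "('a::finite \<times> 'b::finite) cmat \<Rightarrow> ('a \<times> 'b) cmat \<Rightarrow> ('a \<times> 'b) cmat" where
  "Estar \<sigma> \<rho> = msqrt \<sigma> **
     kron (mat 1 :: 'a cmat) (minvsqrt (ptrA \<sigma>) ** ptrA \<rho> ** minvsqrt (ptrA \<sigma>)) ** msqrt \<sigma>"

definition DEA :: "('a::finite \<times> 'b::finite) cmat \<Rightarrow> ('a \<times> 'b) cmat \<Rightarrow> real" where
  "DEA \<rho> \<sigma> = rel_ent \<rho> (Estar \<sigma> \<rho>)"

end

theory Submission
  imports Defs
begin



definition cinner :: "complex^'n::finite \<Rightarrow> complex^'n \<Rightarrow> complex" where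
  "cinner x y = (\<Sum>i\<in>UNIV. cnj (x$i) * y$i)"

lemma cinner_cnj: "cnj (cinner x y) = cinner y x"
  by (simp add: cinner_def mult.commute)

lemma cinner_add_right: "cinner x (y + z) = cinner x y + cinner x z"
  by (simp add: cinner_def distrib_left sum.distrib)
lemma cinner_add_left: "cinner (x + y) z = cinner x z + cinner y z"
  by (simp add: cinner_def distrib_right sum.distrib)
lemma cinner_diff_right: "cinner x (y - z) = cinner x y - cinner x z"
  by (simp add: cinner_def right_diff_distrib sum_subtractf)
lemma cinner_diff_left: "cinner (x - y) z = cinner x z - cinner y z"
  by (simp add: cinner_def left_diff_distrib sum_subtractf)
lemma cinner_scale_right: "cinner x (c *s y) = c * cinner x y"
  by (simp add: cinner_def sum_distrib_left mult.assoc mult.left_commute)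
lemma cinner_scale_left: "cinner (c *s x) y = cnj c * cinner x y"
  by (simp add: cinner_def sum_distrib_left mult.assoc)
lemma cinner_zero_right[simp]: "cinner x 0 = 0" by (simp add: cinner_def)
lemma cinner_zero_left[simp]: "cinner 0 x = 0" by (simp add: cinner_def)
lemma cinner_sum_right: "cinner x (sum f S) = (\<Sum>k\<in>S. cinner x (f k))"
  unfolding cinner_def sum_component sum_distrib_left by (rule sum.swap)
lemma cinner_sum_left: "cinner (sum f S) x = (\<Sum>k\<in>S. cinner (f k) x)"
  unfolding cinner_def sum_component cnj_sum sum_distrib_right by (rule sum.swap)

lemma cinner_self_real: "cinner x x = complex_of_real (\<Sum>i\<in>UNIV. (cmod (x$i))^2)"
  unfolding cinner_def of_real_sum by (rule sum.cong) (simp_all add: complex_norm_square[symmetric] mult.commute del: of_real_power)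

lemma norm_vec_sq: "(norm (x::complex^'n::finite))^2 = (\<Sum>i\<in>UNIV. (cmod (x$i))^2)"
  by (simp add: norm_vec_def L2_set_def sum_nonneg)

lemma cinner_self_norm: "cinner x x = complex_of_real ((norm x)^2)"
  by (simp add: cinner_self_real norm_vec_sq)

lemma cinner_self_eq0: "cinner x x = 0 \<longleftrightarrow> x = 0"
  by (simp add: cinner_self_norm)

lemma adj_adj[simp]: "adj (adj A) = A"
  by (simp add: adj_def vec_eq_iff)

lemma adj_mult: "adj (A ** B) = adj B ** adj A"
  by (simp add: adj_def matrix_matrix_mult_def vec_eq_iff mult.commute)

lemma adj_mat1[simp]: "adj (mat 1) = mat 1"
  by (simp add: adj_def mat_def vec_eq_iff)

lemma adj_add: "adj (A + B) = adj A + adj B"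
  by (simp add: adj_def vec_eq_iff)
lemma adj_diff: "adj (A - B) = adj A - adj B"
  by (simp add: adj_def vec_eq_iff)

lemma cinner_adj: "cinner x (A *v y) = cinner (adj A *v x) y"
  unfolding cinner_def adj_def matrix_vector_mult_def
  by (simp add: sum_distrib_left sum_distrib_right mult_ac cnj_sum) (rule sum.swap)

lemma hermitian_cinner: "hermitian A \<Longrightarrow> cinner x (A *v y) = cinner (A *v x) y"
  by (metis cinner_adj hermitian_def)

lemma qform_cinner: "qform A x = cinner x (A *v x)"
  by (simp add: qform_def cinner_def matrix_vector_mult_def sum_distrib_left mult.assoc)

lemma hermitian_qform_real: "hermitian A \<Longrightarrow> cnj (qform A x) = qform A x"
  by (metis cinner_cnj hermitian_cinner qform_cinner)




lemma exists_orth: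
  fixes vs :: "nat \<Rightarrow> complex^'n::finite"
  assumes k: "k < CARD('n)"
    and on: "\<And>i j. i < k \<Longrightarrow> j < k \<Longrightarrow> cinner (vs i) (vs j) = (if i = j then 1 else 0)"
  shows "\<exists>y. y \<noteq> 0 \<and> (\<forall>i<k. cinner (vs i) y = 0)"
proof -
  let ?S = "vs ` {..<k}"
  have "vec.span ?S \<noteq> UNIV"
  proof
    assume "vec.span ?S = UNIV"
    then have "vec.dim (UNIV::(complex^'n) set) \<le> card ?S"
      by (intro vec.dim_le_card) auto
    also have "\<dots> \<le> k" using card_image_le[of "{..<k}" vs] by simp
    finally have "vec.dim (UNIV::(complex^'n) set) \<le> k" .
    then show False using k vec_dim_card[where 'a=complex and 'n='n] by linarith
  qed
  then obtain z where z: "z \<notin> vec.span ?S" by auto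
  define y where "y = z - (\<Sum>i<k. cinner (vs i) z *s vs i)"
  have "y \<noteq> 0"
  proof
    assume "y = 0"
    then have "z = (\<Sum>i<k. cinner (vs i) z *s vs i)" by (simp add: y_def)
    also have "\<dots> \<in> vec.span ?S"
      by (intro vec.span_sum vec.span_scale vec.span_base) auto
    finally show False using z by simp
  qed
  moreover have "cinner (vs j) y = 0" if j: "j < k" for j
  proof -
    have "cinner (vs j) y = cinner (vs j) z - (\<Sum>i<k. cinner (vs i) z * cinner (vs j) (vs i))"
      by (simp add: y_def cinner_diff_right cinner_sum_right cinner_scale_right)
    also have "(\<Sum>i<k. cinner (vs i) z * cinner (vs j) (vs i)) = (\<Sum>i<k. if i = j then cinner (vs i) z else 0)"
      by (rule sum.cong) (auto simp: on j)
    also have "\<dots> = cinner (vs j) z" using j by simp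
    finally show ?thesis by simp
  qed
  ultimately show ?thesis by blast
qed


lemma mv_vscale: "A *v (c *s x) = c *s (A *v (x::'a::comm_semiring_1^'n))"
  by (simp add: vec_eq_iff matrix_vector_mult_def sum_distrib_left mult_ac)

lemma mv_add: "A *v (x + y) = A *v x + A *v (y::'a::comm_semiring_1^'n)"
  by (simp add: vec_eq_iff matrix_vector_mult_def sum.distrib distrib_left)

lemma mv_diff: "A *v (x - y) = A *v x - A *v (y::'a::comm_ring_1^'n)"
  by (simp add: vec_eq_iff matrix_vector_mult_def sum_subtractf right_diff_distrib)

lemma qform_vscale: "qform A (c *s x) = cnj c * c * qform A x"
  unfolding qform_cinner mv_vscale cinner_scale_left cinner_scale_right by (simp add: mult_ac)

lemma hermitian_Re_qform: "hermitian A \<Longrightarrow> qform A x = complex_of_real (Re (qform A x))"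
proof -
  assume "hermitian A"
  then have "cnj (qform A x) = qform A x" by (rule hermitian_qform_real)
  from arg_cong[where f=Im, OF this] have "Im (qform A x) = 0" by simp
  then show ?thesis by (simp add: complex_eq_iff)
qed

lemma exists_eigen_in:
  fixes A :: "'n::finite cmat" and vs :: "nat \<Rightarrow> complex^'n"
  assumes herm: "hermitian A" and k: "k < CARD('n)"
    and on: "\<And>i j. i < k \<Longrightarrow> j < k \<Longrightarrow> cinner (vs i) (vs j) = (if i = j then 1 else 0)"
    and ev: "\<And>i. i < k \<Longrightarrow> A *v vs i = complex_of_real (ds i) *s vs i"
  shows "\<exists>x l. A *v x = complex_of_real l *s x \<and> cinner x x = 1 \<and> (\<forall>i<k. cinner (vs i) x = 0)"
proof -
  define W where "W = {y. \<forall>i<k. cinner (vs i) y = 0}"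
  define K where "K = sphere 0 1 \<inter> W"
  define f where "f = (\<lambda>y. Re (qform A y))"
  have Wsub: "W = (\<Inter>i<k. {y. cinner (vs i) y = 0})" by (auto simp: W_def)
  have "closed W" unfolding Wsub
  proof (intro closed_INT ballI)
    fix i
    have "continuous_on UNIV (\<lambda>y. cinner (vs i) y)" unfolding cinner_def by (intro continuous_intros)
    then show "closed {y. cinner (vs i) y = 0}"
      using continuous_closed_preimage_constant[of UNIV "\<lambda>y. cinner (vs i) y" 0] by simp
  qed
  then have "compact K" unfolding K_def by (intro compact_Int_closed compact_sphere)
  obtain y0 where y0: "y0 \<noteq> 0" "y0 \<in> W" using exists_orth[OF k on] unfolding W_def by blast
  have Wadd: "a + b \<in> W" if "a \<in> W" "b \<in> W" for a b
    using that by (auto simp: W_def cinner_add_right)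
  have Wscale: "c *s a \<in> W" if "a \<in> W" for a c
    using that by (auto simp: W_def cinner_scale_right)
  have nsq: "cinner u u = complex_of_real ((norm u)^2)" for u by (rule cinner_self_norm)
  have unit: "(complex_of_real (1 / norm u)) *s u \<in> K" if "u \<in> W" "u \<noteq> 0" for u
  proof -
    let ?v = "(complex_of_real (1 / norm u)) *s u"
    have "complex_of_real ((norm ?v)^2) = cinner ?v ?v" by (simp add: nsq)
    also have "\<dots> = complex_of_real ((1/norm u)^2 * (norm u)^2)"
      by (simp only: cinner_scale_left cinner_scale_right nsq[of u]) (simp add: power2_eq_square)
    also have "\<dots> = 1" using that by (simp add: field_simps)
    finally have "(norm ?v)^2 = 1" by (metis of_real_eq_1_iff)
    then have "norm ?v = 1" by (smt (verit) norm_ge_zero power2_eq_1_iff)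
    then show ?thesis using that Wscale by (auto simp: K_def)
  qed
  have "K \<noteq> {}" using unit[OF y0(2) y0(1)] by auto
  moreover have "continuous_on K f" unfolding f_def qform_def by (intro continuous_intros)
  ultimately obtain x where xK: "x \<in> K" and xmax: "\<And>y. y \<in> K \<Longrightarrow> f y \<le> f x"
    using continuous_attains_sup[OF \<open>compact K\<close>] by blast
  define l where "l = f x"
  have xW: "x \<in> W" and xn: "norm x = 1" using xK by (auto simp: K_def)
  have xx: "cinner x x = 1" using xn by (simp add: nsq)
  have bound: "f u \<le> l * (norm u)^2" if "u \<in> W" for u
  proof (cases "u = 0")
    case True then show ?thesis by (simp add: f_def qform_def)
  next
    case False
    have "f ((complex_of_real (1 / norm u)) *s u) \<le> l" unfolding l_def using xmax unit[OF that False] by blast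
    also have "f ((complex_of_real (1 / norm u)) *s u) = (1/norm u)^2 * f u"
      by (simp add: f_def qform_vscale power2_eq_square)
    finally show ?thesis using False by (simp add: field_simps)
  qed
  have ql: "qform A x = complex_of_real l" unfolding l_def f_def by (rule hermitian_Re_qform[OF herm])
  define r where "r = A *v x - complex_of_real l *s x"
  have rW: "r \<in> W"
  proof -
    have "cinner (vs i) (A *v x) = 0" if "i < k" for i
    proof -
      have "cinner (vs i) (A *v x) = cinner (A *v vs i) x" by (rule hermitian_cinner[OF herm])
      also have "\<dots> = 0" using ev[OF that] xW that by (simp add: cinner_scale_left W_def)
      finally show ?thesis .
    qed
    then show ?thesis using xW by (auto simp: W_def r_def cinner_diff_right cinner_scale_right)
  qed
  have xr: "cinner x r = 0"
    by (simp add: r_def cinner_diff_right cinner_scale_right xx ql[unfolded qform_cinner])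
  have rx: "cinner r x = 0" using xr cinner_cnj[of x r] by simp
  define R where "R = (norm r)^2"
  have rAx: "cinner r (A *v x) = complex_of_real R"
  proof -
    have "A *v x = r + complex_of_real l *s x" by (simp add: r_def)
    then have "cinner r (A *v x) = cinner r r + complex_of_real l * cinner r x"
      by (simp add: cinner_add_right cinner_scale_right)
    then show ?thesis by (simp add: rx nsq R_def)
  qed
  have xAr: "cinner x (A *v r) = complex_of_real R"
    using rAx hermitian_cinner[OF herm, of x r] cinner_cnj[of r "A *v x"] by simp
  define Q where "Q = Re (cinner r (A *v r))"
  have ineq: "2 * t * R \<le> t^2 * (l * R - Q)" for t :: real
  proof -
    define u where "u = x + complex_of_real t *s r"
    have uW: "u \<in> W" unfolding u_def using xW rW Wadd Wscale by blast
    have "complex_of_real ((norm u)^2) = cinner u u" by (simp add: nsq)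
    also have "\<dots> = cinner x x + complex_of_real t * cinner x r + complex_of_real t * cinner r x
        + complex_of_real t * complex_of_real t * cinner r r"
      by (simp add: u_def cinner_add_left cinner_add_right cinner_scale_left cinner_scale_right algebra_simps)
    also have "\<dots> = complex_of_real (1 + t^2 * R)" by (simp add: xx xr rx nsq[of r] R_def power2_eq_square)
    finally have nu: "(norm u)^2 = 1 + t^2 * R" by (metis of_real_eq_iff)
    have "qform A u = cinner x (A *v x) + complex_of_real t * cinner x (A *v r)
        + complex_of_real t * cinner r (A *v x) + complex_of_real t * complex_of_real t * cinner r (A *v r)"
      by (simp add: u_def qform_cinner mv_add mv_vscale
          cinner_add_left cinner_add_right cinner_scale_left cinner_scale_right algebra_simps)
    then have "f u = l + 2 * t * R + t^2 * Q"
      by (simp add: f_def xAr rAx ql[unfolded qform_cinner] Q_def power2_eq_square)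
    with bound[OF uW] nu show ?thesis by (simp add: algebra_simps)
  qed
  have R0: "R = 0"
  proof (rule ccontr)
    assume "R \<noteq> 0"
    then have Rpos: "R > 0" by (simp add: R_def)
    define C where "C = l * R - Q"
    show False
    proof (cases "C \<le> 0")
      case True
      from ineq[of 1] have "2 * R \<le> C" by (simp add: C_def)
      with True Rpos show False by simp
    next
      case False
      from ineq[of "R / C"] have "2 * (R / C) * R \<le> (R/C)^2 * C" by (simp add: C_def)
      also have "(R/C)^2 * C = (R / C) * R" using False by (simp add: power2_eq_square)
      finally have "(R / C) * R \<le> 0" by simp
      moreover have "(R / C) * R > 0" using False Rpos by simp
      ultimately show False by simp
    qed
  qed
  then have "r = 0" by (simp add: R_def)
  then have "A *v x = complex_of_real l *s x" by (simp add: r_def)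
  then show ?thesis using xx xW unfolding W_def by blast
qed

lemma spectral_aux:
  fixes A :: "'n::finite cmat"
  assumes herm: "hermitian A"
  shows "k \<le> CARD('n) \<Longrightarrow> \<exists>vs ds. (\<forall>i<k. A *v vs i = complex_of_real (ds i) *s vs i) \<and>
     (\<forall>i<k. \<forall>j<k. cinner (vs i) (vs j) = (if i = j then 1 else 0))"
proof (induction k)
  case 0 show ?case by auto
next
  case (Suc k)
  then obtain vs ds where ev: "\<forall>i<k. A *v vs i = complex_of_real (ds i) *s vs i"
    and on: "\<forall>i<k. \<forall>j<k. cinner (vs i) (vs j) = (if i = j then 1 else 0)" by auto
  from Suc.prems have k: "k < CARD('n)" by simp
  obtain x l where x: "A *v x = complex_of_real l *s x" "cinner x x = 1" "\<forall>i<k. cinner (vs i) x = 0"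
    using exists_eigen_in[OF herm k, of vs ds] on ev by blast
  have xi: "cinner x (vs i) = 0" if "i < k" for i using x(3) that cinner_cnj[of "vs i" x] by auto
  show ?case
  proof (intro exI conjI allI impI)
    fix i assume "i < Suc k"
    then show "A *v (vs(k := x)) i = complex_of_real ((ds(k := l)) i) *s (vs(k := x)) i"
      using ev x by (cases "i = k") auto
  next
    fix i j assume "i < Suc k" "j < Suc k"
    then show "cinner ((vs(k := x)) i) ((vs(k := x)) j) = (if i = j then 1 else 0)"
      using on x xi by (cases "i = k"; cases "j = k") auto
  qed
qed

theorem spectral:
  fixes A :: "'n::finite cmat"
  assumes herm: "hermitian A"
  shows "\<exists>U d. unitary U \<and> A = U ** rdiag d ** adj U"
proof -
  obtain vs ds where ev: "\<forall>i<CARD('n). A *v vs i = complex_of_real (ds i) *s vs i"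
    and on: "\<forall>i<CARD('n). \<forall>j<CARD('n). cinner (vs i) (vs j) = (if i = j then 1 else 0)"
    using spectral_aux[OF herm, of "CARD('n)"] by auto
  obtain g :: "'n \<Rightarrow> nat" where g: "bij_betw g UNIV {..<CARD('n)}"
    using to_nat_on_finite[of "UNIV::'n set"] by auto
  have gl: "g j < CARD('n)" for j using g by (auto simp: bij_betw_def)
  have ginj: "g i = g j \<longleftrightarrow> i = j" for i j using g by (auto simp: bij_betw_def inj_on_def)
  define U :: "'n cmat" where "U = (\<chi> i j. vs (g j) $ i)"
  define d where "d = ds \<circ> g"
  have UU: "adj U ** U = mat 1"
  proof -
    have "(adj U ** U) $ j $ l = cinner (vs (g j)) (vs (g l))" for j l
      by (simp add: U_def adj_def matrix_matrix_mult_def cinner_def)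
    then show ?thesis using on gl ginj by (simp add: vec_eq_iff mat_def)
  qed
  then have UU': "U ** adj U = mat 1" using matrix_left_right_inverse by blast
  have AU: "A ** U = U ** rdiag d"
  proof -
    have "(A ** U) $ i $ l = (A *v vs (g l)) $ i" for i l
      by (simp add: U_def matrix_matrix_mult_def matrix_vector_mult_def)
    moreover have "(U ** rdiag d) $ i $ l = complex_of_real (d l) * vs (g l) $ i" for i l
    proof -
      have "(U ** rdiag d) $ i $ l = (\<Sum>m\<in>UNIV. if m = l then vs (g m) $ i * complex_of_real (d l) else 0)"
        by (simp add: U_def rdiag_def matrix_matrix_mult_def if_distrib if_distribR cong: if_cong)
      then show ?thesis by (simp add: mult.commute)
    qed
    ultimately show ?thesis using ev gl by (simp add: vec_eq_iff d_def)
  qed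
  have "A = A ** (U ** adj U)" using UU' by simp
  also have "\<dots> = U ** rdiag d ** adj U" by (simp add: matrix_mul_assoc AU)
  finally show ?thesis using UU UU' unfolding unitary_def by blast
qed




lemma mult_rdiag_entry: "(M ** rdiag d) $ i $ j = M $ i $ j * complex_of_real (d j)"
proof -
  have "(M ** rdiag d) $ i $ j = (\<Sum>k\<in>UNIV. if k = j then M $ i $ k * complex_of_real (d j) else 0)"
    by (simp add: rdiag_def matrix_matrix_mult_def if_distrib if_distribR cong: if_cong)
  then show ?thesis by simp
qed

lemma rdiag_mult_entry: "(rdiag d ** M) $ i $ j = complex_of_real (d i) * M $ i $ j"
proof -
  have "(rdiag d ** M) $ i $ j = (\<Sum>k\<in>UNIV. if k = i then complex_of_real (d i) * M $ k $ j else 0)"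
    by (simp add: rdiag_def matrix_matrix_mult_def if_distrib if_distribR cong: if_cong)
  then show ?thesis by simp
qed

lemma rdiag_entry: "rdiag d $ i $ j = (if i = j then complex_of_real (d i) else 0)"
  by (simp add: rdiag_def)

lemma rdiag_rdiag: "rdiag a ** rdiag b = rdiag (\<lambda>i. a i * b i)"
  by (simp add: vec_eq_iff mult_rdiag_entry rdiag_entry)

lemma adj_rdiag[simp]: "adj (rdiag d) = rdiag d"
  by (simp add: adj_def rdiag_def vec_eq_iff)

lemma rdiag_one: "rdiag (\<lambda>i. 1) = mat 1"
  by (simp add: rdiag_def mat_def vec_eq_iff)

lemma intertwine:
  assumes U: "unitary U" and V: "unitary V"
    and W: "(adj U ** V) ** rdiag q = rdiag p ** (adj U ** V)"
  shows "V ** rdiag q ** adj V = U ** rdiag p ** adj U"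
proof -
  have UU: "U ** adj U = mat 1" "adj U ** U = mat 1" and VV: "V ** adj V = mat 1" "adj V ** V = mat 1"
    using U V by (auto simp: unitary_def)
  have "V = U ** (adj U ** V)" by (simp add: matrix_mul_assoc UU)
  then have "V ** rdiag q ** adj V = U ** ((adj U ** V) ** rdiag q) ** adj V"
    by (metis matrix_mul_assoc)
  also have "\<dots> = U ** rdiag p ** (adj U ** (V ** adj V))" by (simp add: W matrix_mul_assoc)
  also have "\<dots> = U ** rdiag p ** adj U" by (simp add: VV)
  finally show ?thesis .
qed

lemma intertwine_f:
  assumes "W ** rdiag d = rdiag e ** W"
  shows "W ** rdiag (f \<circ> d) = rdiag (f \<circ> e) ** W"
proof -
  have "W $ i $ j * complex_of_real (d j) = complex_of_real (e i) * W $ i $ j" for i j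
    using assms by (metis mult_rdiag_entry rdiag_mult_entry)
  note h = this
  have "W $ i $ j * complex_of_real (f (d j)) = complex_of_real (f (e i)) * W $ i $ j" for i j
  proof (cases "W $ i $ j = 0")
    case True then show ?thesis by simp
  next
    case False
    with h[of i j] have "d j = e i" by (simp add: mult.commute)
    then show ?thesis by (simp add: mult.commute)
  qed
  then show ?thesis by (simp add: vec_eq_iff mult_rdiag_entry rdiag_mult_entry)
qed

lemma mfun_welldef:
  assumes U: "unitary U" and V: "unitary V" and eq: "U ** rdiag d ** adj U = V ** rdiag e ** adj V"
  shows "U ** rdiag (f \<circ> d) ** adj U = V ** rdiag (f \<circ> e) ** adj V"
proof -
  have UU: "U ** adj U = mat 1" "adj U ** U = mat 1" and VV: "V ** adj V = mat 1" "adj V ** V = mat 1"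
    using U V by (auto simp: unitary_def)
  have "(adj V ** U) ** rdiag d = adj V ** (U ** rdiag d ** adj U) ** U"
    by (simp add: matrix_mul_assoc[symmetric] UU)
  also have "\<dots> = adj V ** (V ** rdiag e ** adj V) ** U" by (simp add: eq)
  also have "\<dots> = rdiag e ** (adj V ** U)"
    by (simp add: matrix_mul_assoc VV)
  finally have "(adj V ** U) ** rdiag (f \<circ> d) = rdiag (f \<circ> e) ** (adj V ** U)" by (rule intertwine_f)
  from intertwine[OF V U this] show ?thesis .
qed

lemma mfun_eq:
  assumes U: "unitary U" and A: "A = U ** rdiag d ** adj U"
  shows "mfun f A = U ** rdiag (f \<circ> d) ** adj U"
proof -
  let ?P = "\<lambda>B. \<exists>U d. unitary U \<and> A = U ** rdiag d ** adj U \<and> B = U ** rdiag (f \<circ> d) ** adj U"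
  have "?P (U ** rdiag (f \<circ> d) ** adj U)" using U A by blast
  then have "?P (mfun f A)" unfolding mfun_def by (rule someI)
  then obtain V e where V: "unitary V" "A = V ** rdiag e ** adj V" "mfun f A = V ** rdiag (f \<circ> e) ** adj V"
    by blast
  show ?thesis using mfun_welldef[OF V(1) U, of e d f] V A by simp
qed

lemma hermitian_decomp: "hermitian (U ** rdiag d ** adj U)"
  by (simp add: hermitian_def adj_mult matrix_mul_assoc)

lemma unitary_UU: "unitary U \<Longrightarrow> U ** adj U = mat 1" "unitary U \<Longrightarrow> adj U ** U = mat 1"
  by (auto simp: unitary_def)

lemma decomp_mult: "unitary U \<Longrightarrow> (U ** rdiag a ** adj U) ** (U ** rdiag b ** adj U) = U ** rdiag (\<lambda>i. a i * b i) ** adj U"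
proof -
  assume U: "unitary U"
  have "(U ** rdiag a ** adj U) ** (U ** rdiag b ** adj U) = U ** rdiag a ** (adj U ** U) ** rdiag b ** adj U"
    by (simp add: matrix_mul_assoc)
  also have "\<dots> = U ** rdiag (\<lambda>i. a i * b i) ** adj U" using unitary_UU[OF U]
    by (simp add: matrix_mul_assoc[symmetric] rdiag_rdiag)
  finally show ?thesis .
qed

lemma mfun_mult:
  assumes "hermitian A"
  shows "mfun f A ** mfun g A = mfun (\<lambda>x. f x * g x) A"
proof -
  obtain U d where U: "unitary U" "A = U ** rdiag d ** adj U" using spectral[OF assms] by blast
  show ?thesis using decomp_mult[OF U(1)] by (simp add: mfun_eq[OF U] o_def)
qed

lemma mfun_id:
  assumes "hermitian A"
  shows "mfun (\<lambda>x. x) A = A"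
proof -
  obtain U d where U: "unitary U" "A = U ** rdiag d ** adj U" using spectral[OF assms] by blast
  have "mfun (\<lambda>x. x) A = U ** rdiag ((\<lambda>x. x) \<circ> d) ** adj U" by (rule mfun_eq[OF U])
  then show ?thesis by (simp add: o_def U(2)[symmetric])
qed

lemma hermitian_mfun: "hermitian A \<Longrightarrow> hermitian (mfun f A)"
  by (metis hermitian_decomp mfun_eq spectral)

lemma mfun_one:
  assumes "hermitian A" and "\<And>x. f x = 1"
  shows "mfun f A = mat 1"
proof -
  obtain U d where U: "unitary U" "A = U ** rdiag d ** adj U" using spectral[OF assms(1)] by blast
  have "f \<circ> d = (\<lambda>i. 1)" using assms(2) by auto
  then show ?thesis by (simp add: mfun_eq[OF U] rdiag_one unitary_UU[OF U(1)])
qed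

lemma pos_def_hermitian: "pos_def A \<Longrightarrow> hermitian A"
  by (simp add: pos_def_def)

lemma pos_def_iff: "pos_def A \<longleftrightarrow> hermitian A \<and> (\<forall>x. x \<noteq> 0 \<longrightarrow> Re (qform A x) > 0)"
  unfolding pos_def_def using hermitian_Re_qform by (metis Im_complex_of_real)

lemma adjU_A_U: "unitary U \<Longrightarrow> A = U ** rdiag d ** adj U \<Longrightarrow> adj U ** A ** U = rdiag d"
  by (simp add: matrix_mul_assoc unitary_UU) (simp add: matrix_mul_assoc[symmetric] unitary_UU)

lemma qform_col: "(adj U ** A ** U) $ i $ i = qform A (column i U)"
proof -
  have "(adj U ** A ** U) $ i $ i = (\<Sum>k\<in>UNIV. \<Sum>j\<in>UNIV. cnj (U$j$i) * A$j$k * U$k$i)"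
    by (simp add: adj_def matrix_matrix_mult_def sum_distrib_right)
  also have "\<dots> = (\<Sum>j\<in>UNIV. \<Sum>k\<in>UNIV. cnj (U$j$i) * A$j$k * U$k$i)" by (rule sum.swap)
  finally show ?thesis by (simp add: qform_def column_def)
qed




lemma ln_less_minus_one: "0 < (x::real) \<Longrightarrow> x \<noteq> 1 \<Longrightarrow> ln x < x - 1"
proof -
  assume x: "0 < x" "x \<noteq> 1"
  have s: "sqrt x > 0" "sqrt x \<noteq> 1" using x by auto
  have "ln x = 2 * ln (sqrt x)" using x by (simp add: ln_sqrt)
  also have "\<dots> \<le> 2 * (sqrt x - 1)" using ln_le_minus_one[OF s(1)] by simp
  also have "\<dots> < x - 1"
  proof -
    have "(sqrt x - 1)^2 > 0" using s by simp
    then show ?thesis using x by (simp add: power2_eq_square algebra_simps)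
  qed
  finally show ?thesis .
qed

lemma klein_scalar: "0 < (p::real) \<Longrightarrow> 0 < q \<Longrightarrow> p * ln p - p * ln q \<ge> p - q"
proof -
  assume pq: "0 < p" "0 < q"
  have "ln (q / p) \<le> q / p - 1" using pq by (intro ln_le_minus_one) simp
  then have "p * ln (q/p) \<le> p * (q/p - 1)" using pq by (simp add: mult_left_mono)
  then show ?thesis using pq by (simp add: ln_div algebra_simps)
qed

lemma klein_scalar_strict: "0 < (p::real) \<Longrightarrow> 0 < q \<Longrightarrow> p \<noteq> q \<Longrightarrow> p * ln p - p * ln q > p - q"
proof -
  assume pq: "0 < p" "0 < q" "p \<noteq> q"
  have "ln (q / p) < q / p - 1" using pq by (intro ln_less_minus_one) auto
  then have "p * ln (q/p) < p * (q/p - 1)" using pq by (simp add: mult_strict_left_mono)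
  then show ?thesis using pq by (simp add: ln_div algebra_simps)
qed

lemma klein_spectral:
  fixes p q :: "'n::finite \<Rightarrow> real" and w :: "'n \<Rightarrow> 'n \<Rightarrow> real"
  assumes p: "\<And>i. p i > 0" and q: "\<And>j. q j > 0"
    and w: "\<And>i j. w i j \<ge> 0"
    and row: "\<And>i. (\<Sum>j\<in>UNIV. w i j) = 1" and col: "\<And>j. (\<Sum>i\<in>UNIV. w i j) = 1"
    and sp: "(\<Sum>i\<in>UNIV. p i) = 1" and sq: "(\<Sum>j\<in>UNIV. q j) = 1"
  shows "(\<Sum>i\<in>UNIV. \<Sum>j\<in>UNIV. w i j * (p i * ln (p i) - p i * ln (q j))) \<ge> 0"
    and "(\<Sum>i\<in>UNIV. \<Sum>j\<in>UNIV. w i j * (p i * ln (p i) - p i * ln (q j))) = 0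
          \<longleftrightarrow> (\<forall>i j. w i j \<noteq> 0 \<longrightarrow> p i = q j)"
proof -
  define T where "T i j = w i j * (p i * ln (p i) - p i * ln (q j))" for i j
  define L where "L i j = w i j * (p i - q j)" for i j
  have TL: "T i j \<ge> L i j" for i j unfolding T_def L_def
    using klein_scalar[OF p q] w by (simp add: mult_left_mono)
  have sumL: "(\<Sum>i\<in>UNIV. \<Sum>j\<in>UNIV. L i j) = 0"
  proof -
    have "(\<Sum>i\<in>UNIV. \<Sum>j\<in>UNIV. L i j) = (\<Sum>i\<in>UNIV. \<Sum>j\<in>UNIV. w i j * p i) - (\<Sum>i\<in>UNIV. \<Sum>j\<in>UNIV. w i j * q j)"
      by (simp add: L_def right_diff_distrib sum_subtractf)
    also have "(\<Sum>i\<in>UNIV. \<Sum>j\<in>UNIV. w i j * p i) = (\<Sum>i\<in>UNIV. p i)"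
      by (simp add: sum_distrib_right[symmetric] row)
    also have "(\<Sum>i\<in>UNIV. \<Sum>j\<in>UNIV. w i j * q j) = (\<Sum>j\<in>UNIV. \<Sum>i\<in>UNIV. w i j * q j)" by (rule sum.swap)
    also have "\<dots> = (\<Sum>j\<in>UNIV. q j)" by (simp add: sum_distrib_right[symmetric] col)
    finally show ?thesis using sp sq by simp
  qed
  have ge: "(\<Sum>i\<in>UNIV. \<Sum>j\<in>UNIV. T i j) \<ge> (\<Sum>i\<in>UNIV. \<Sum>j\<in>UNIV. L i j)"
    by (intro sum_mono TL)
  then show "(\<Sum>i\<in>UNIV. \<Sum>j\<in>UNIV. w i j * (p i * ln (p i) - p i * ln (q j))) \<ge> 0"
    using sumL by (simp add: T_def)
  show "(\<Sum>i\<in>UNIV. \<Sum>j\<in>UNIV. w i j * (p i * ln (p i) - p i * ln (q j))) = 0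
          \<longleftrightarrow> (\<forall>i j. w i j \<noteq> 0 \<longrightarrow> p i = q j)"
  proof
    assume eq: "(\<Sum>i\<in>UNIV. \<Sum>j\<in>UNIV. w i j * (p i * ln (p i) - p i * ln (q j))) = 0"
    show "\<forall>i j. w i j \<noteq> 0 \<longrightarrow> p i = q j"
    proof (intro allI impI, rule ccontr)
      fix i j assume wij: "w i j \<noteq> 0" and ne: "p i \<noteq> q j"
      have "T i j > L i j" unfolding T_def L_def
        using klein_scalar_strict[OF p q ne] wij w[of i j] by (simp add: mult_strict_left_mono)
      then have "(\<Sum>j'\<in>UNIV. T i j') > (\<Sum>j'\<in>UNIV. L i j')"
        by (intro sum_strict_mono_ex1) (auto intro: TL)
      then have "(\<Sum>i\<in>UNIV. \<Sum>j\<in>UNIV. T i j) > (\<Sum>i\<in>UNIV. \<Sum>j\<in>UNIV. L i j)"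
        by (intro sum_strict_mono_ex1) (auto intro: sum_mono TL)
      then show False using eq sumL by (simp add: T_def)
    qed
  next
    assume h: "\<forall>i j. w i j \<noteq> 0 \<longrightarrow> p i = q j"
    have "T i j = L i j" for i j using h by (cases "w i j = 0") (auto simp: T_def L_def)
    then show "(\<Sum>i\<in>UNIV. \<Sum>j\<in>UNIV. w i j * (p i * ln (p i) - p i * ln (q j))) = 0"
      using sumL by (simp add: T_def[symmetric])
  qed
qed




lemma mm_diff_right: "(A::'a::comm_ring_1^'n^'m) ** (B - C) = A ** B - A ** C"
  by (simp add: vec_eq_iff matrix_matrix_mult_def sum_subtractf right_diff_distrib)
lemma mm_diff_left: "((A::'a::comm_ring_1^'n^'m) - B) ** C = A ** C - B ** C"
  by (simp add: vec_eq_iff matrix_matrix_mult_def sum_subtractf left_diff_distrib)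
lemma mm_add_left: "((A::'a::comm_ring_1^'n^'m) + B) ** C = A ** C + B ** C"
  by (simp add: vec_eq_iff matrix_matrix_mult_def sum.distrib distrib_right)

lemma trace_rdiag: "trace (rdiag d) = (\<Sum>i\<in>UNIV. complex_of_real (d i))"
  by (simp add: trace_def rdiag_def)

lemma unitary_adj: "unitary U \<Longrightarrow> unitary (adj U)"
  by (simp add: unitary_def)

lemma unitary_mult: "unitary U \<Longrightarrow> unitary V \<Longrightarrow> unitary (U ** V)"
  unfolding unitary_def adj_mult
  by (simp add: matrix_mul_assoc) (simp add: matrix_mul_assoc[symmetric])

lemma unitary_row: "unitary W \<Longrightarrow> (\<Sum>j\<in>UNIV. (cmod (W$i$j))^2) = 1"
proof -
  assume "unitary W"
  then have "(W ** adj W) $ i $ i = 1" by (simp add: unitary_def mat_def)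
  then have "(\<Sum>j\<in>UNIV. W$i$j * cnj (W$i$j)) = 1" by (simp add: matrix_matrix_mult_def adj_def)
  then have "complex_of_real (\<Sum>j\<in>UNIV. (cmod (W$i$j))^2) = 1"
    by (simp add: complex_norm_square[symmetric] del: of_real_power)
  then show ?thesis by (metis of_real_eq_1_iff)
qed

lemma unitary_col: "unitary W \<Longrightarrow> (\<Sum>i\<in>UNIV. (cmod (W$i$j))^2) = 1"
proof -
  assume "unitary W"
  then have "(adj W ** W) $ j $ j = 1" by (simp add: unitary_def mat_def)
  then have "(\<Sum>i\<in>UNIV. W$i$j * cnj (W$i$j)) = 1" by (simp add: matrix_matrix_mult_def adj_def mult.commute)
  then have "complex_of_real (\<Sum>i\<in>UNIV. (cmod (W$i$j))^2) = 1"
    by (simp add: complex_norm_square[symmetric] del: of_real_power)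
  then show ?thesis by (metis of_real_eq_1_iff)
qed

lemma trace_pair:
  assumes U: "unitary U" and V: "unitary V"
  shows "trace ((U ** rdiag a ** adj U) ** (V ** rdiag b ** adj V)) =
    (\<Sum>i\<in>UNIV. \<Sum>j\<in>UNIV. complex_of_real (a i * b j * (cmod ((adj U ** V)$i$j))^2))"
proof -
  define W where "W = adj U ** V"
  have "trace ((U ** rdiag a ** adj U) ** (V ** rdiag b ** adj V)) = trace (U ** (rdiag a ** adj U ** V ** rdiag b ** adj V))"
    by (simp add: matrix_mul_assoc)
  also have "\<dots> = trace ((rdiag a ** adj U ** V ** rdiag b ** adj V) ** U)" by (rule trace_mul_sym)
  also have "\<dots> = trace ((rdiag a ** W ** rdiag b) ** adj W)"
    by (simp add: W_def adj_mult matrix_mul_assoc)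
  also have "\<dots> = (\<Sum>i\<in>UNIV. \<Sum>j\<in>UNIV. complex_of_real (a i) * W$i$j * complex_of_real (b j) * cnj (W$i$j))"
    by (simp add: trace_def matrix_matrix_mult_def[of "rdiag a ** W ** rdiag b"] mult_rdiag_entry rdiag_mult_entry adj_def)
  also have "\<dots> = (\<Sum>i\<in>UNIV. \<Sum>j\<in>UNIV. complex_of_real (a i * b j * (cmod (W$i$j))^2))"
    by (intro sum.cong refl) (simp add: complex_norm_square[symmetric] mult_ac del: of_real_power)
  finally show ?thesis by (simp add: W_def)
qed

lemma trace_single:
  assumes U: "unitary U"
  shows "trace (U ** rdiag a ** adj U) = (\<Sum>i\<in>UNIV. complex_of_real (a i))"
proof -
  have "trace (U ** rdiag a ** adj U) = trace (U ** (rdiag a ** adj U))" by (simp add: matrix_mul_assoc)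
  also have "\<dots> = trace ((rdiag a ** adj U) ** U)" by (rule trace_mul_sym)
  also have "\<dots> = trace (rdiag a)" by (simp add: matrix_mul_assoc[symmetric] unitary_UU[OF U])
  finally show ?thesis by (simp add: trace_rdiag)
qed

lemma pd_decomp:
  assumes "pos_def A"
  shows "\<exists>U d. unitary U \<and> A = U ** rdiag d ** adj U \<and> (\<forall>i. d i > 0)"
proof -
  have herm: "hermitian A" using assms by (simp add: pos_def_def)
  obtain U d where U: "unitary U" "A = U ** rdiag d ** adj U" using spectral[OF herm] by blast
  have "d i > 0" for i
  proof -
    have "complex_of_real (d i) = (adj U ** A ** U) $ i $ i" using adjU_A_U[OF U] by (simp add: rdiag_def)
    also have "\<dots> = qform A (column i U)" by (rule qform_col)
    finally have e: "complex_of_real (d i) = qform A (column i U)" .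
    have "(adj U ** U) $ i $ i = 1" using unitary_UU[OF U(1)] by (simp add: mat_def)
    then have s1: "(\<Sum>k\<in>UNIV. cnj (U$k$i) * U$k$i) = 1" by (simp add: matrix_matrix_mult_def adj_def)
    have "column i U \<noteq> 0"
    proof
      assume "column i U = 0"
      then have "U$k$i = 0" for k by (metis column_def vec_lambda_beta zero_index)
      then show False using s1 by simp
    qed
    then have "Re (qform A (column i U)) > 0" using assms by (simp add: pos_def_def)
    then show ?thesis using e by (metis Re_complex_of_real)
  qed
  then show ?thesis using U by blast
qed

lemma full_rank_decomp:
  assumes "full_rank_state A"
  shows "\<exists>U d. unitary U \<and> A = U ** rdiag d ** adj U \<and> (\<forall>i. d i > 0) \<and> (\<Sum>i\<in>UNIV. d i) = 1"
proof -
  from assms have "pos_def A" by (simp add: full_rank_state_def)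
  from pd_decomp[OF this] obtain U d where U: "unitary U" "A = U ** rdiag d ** adj U" "\<forall>i. d i > 0"
    by blast
  have "complex_of_real (\<Sum>i\<in>UNIV. d i) = trace A" using trace_single[OF U(1)] U(2) by simp
  then have "complex_of_real (\<Sum>i\<in>UNIV. d i) = 1" using assms by (simp add: full_rank_state_def)
  then have "(\<Sum>i\<in>UNIV. d i) = 1" by (metis of_real_eq_1_iff)
  then show ?thesis using U by blast
qed

lemma mlog_decomp: "unitary U \<Longrightarrow> A = U ** rdiag d ** adj U \<Longrightarrow> mlog A = U ** rdiag (\<lambda>i. ln (d i)) ** adj U"
  unfolding mlog_def by (drule mfun_eq[where f = ln]) (auto simp: o_def)

theorem klein:
  assumes r: "full_rank_state \<rho>" and s: "full_rank_state \<sigma>"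
  shows "rel_ent \<rho> \<sigma> \<ge> 0" "rel_ent \<rho> \<sigma> = 0 \<longleftrightarrow> \<rho> = \<sigma>"
proof -
  obtain U p where U: "unitary U" "\<rho> = U ** rdiag p ** adj U" "\<forall>i. p i > 0" "(\<Sum>i\<in>UNIV. p i) = 1"
    using full_rank_decomp[OF r] by blast
  obtain V q where V: "unitary V" "\<sigma> = V ** rdiag q ** adj V" "\<forall>i. q i > 0" "(\<Sum>i\<in>UNIV. q i) = 1"
    using full_rank_decomp[OF s] by blast
  define W where "W = adj U ** V"
  have Wu: "unitary W" unfolding W_def by (intro unitary_mult unitary_adj U V)
  define w where "w i j = (cmod (W$i$j))^2" for i j
  have UU: "adj U ** U = mat 1" using unitary_UU[OF U(1)] by simp
  have l1: "trace (\<rho> ** mlog \<rho>) = (\<Sum>i\<in>UNIV. \<Sum>j\<in>UNIV. complex_of_real (p i * ln (p j) * (cmod ((adj U ** U)$i$j))^2))"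
    unfolding mlog_decomp[OF U(1,2)] by (simp only: U(2)) (rule trace_pair[OF U(1) U(1)])
  have l2: "trace (\<rho> ** mlog \<sigma>) = (\<Sum>i\<in>UNIV. \<Sum>j\<in>UNIV. complex_of_real (p i * ln (q j) * w i j))"
    unfolding mlog_decomp[OF V(1,2)] w_def W_def by (simp only: U(2)) (rule trace_pair[OF U(1) V(1)])
  have "(\<Sum>i\<in>UNIV. \<Sum>j\<in>UNIV. complex_of_real (p i * ln (p j) * (cmod ((adj U ** U)$i$j))^2))
        = (\<Sum>i\<in>UNIV. \<Sum>j\<in>UNIV. complex_of_real (w i j * (p i * ln (p i))))"
  proof (rule sum.cong[OF refl])
    fix i
    have "(\<Sum>j\<in>UNIV. complex_of_real (p i * ln (p j) * (cmod ((adj U ** U)$i$j))^2))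
      = (\<Sum>j\<in>UNIV. if j = i then complex_of_real (p i * ln (p i)) else 0)"
      by (intro sum.cong refl) (simp add: UU mat_def)
    also have "\<dots> = complex_of_real (p i * ln (p i))" by simp
    also have "\<dots> = (\<Sum>j\<in>UNIV. complex_of_real (w i j * (p i * ln (p i))))"
    proof -
      have "(\<Sum>j\<in>UNIV. w i j) = 1" by (simp add: w_def unitary_row[OF Wu])
      then have "(\<Sum>j\<in>UNIV. w i j * (p i * ln (p i))) = p i * ln (p i)" by (simp add: sum_distrib_right[symmetric])
      then show ?thesis by (metis of_real_sum)
    qed
    finally show "(\<Sum>j\<in>UNIV. complex_of_real (p i * ln (p j) * (cmod ((adj U ** U)$i$j))^2))
      = (\<Sum>j\<in>UNIV. complex_of_real (w i j * (p i * ln (p i))))" .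
  qed
  with l1 have l1': "trace (\<rho> ** mlog \<rho>) = (\<Sum>i\<in>UNIV. \<Sum>j\<in>UNIV. complex_of_real (w i j * (p i * ln (p i))))" by simp
  have re: "rel_ent \<rho> \<sigma> = (\<Sum>i\<in>UNIV. \<Sum>j\<in>UNIV. w i j * (p i * ln (p i) - p i * ln (q j)))"
  proof -
    have "rel_ent \<rho> \<sigma> = Re (trace (\<rho> ** mlog \<rho>)) - Re (trace (\<rho> ** mlog \<sigma>))"
      by (simp add: rel_ent_def mm_diff_right trace_sub)
    also have "\<dots> = (\<Sum>i\<in>UNIV. \<Sum>j\<in>UNIV. w i j * (p i * ln (p i))) - (\<Sum>i\<in>UNIV. \<Sum>j\<in>UNIV. p i * ln (q j) * w i j)"
      unfolding l1' l2 by (simp add: Re_sum)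
    also have "\<dots> = (\<Sum>i\<in>UNIV. \<Sum>j\<in>UNIV. w i j * (p i * ln (p i) - p i * ln (q j)))"
      by (simp add: sum_subtractf[symmetric] algebra_simps)
    finally show ?thesis .
  qed
  have wpos: "w i j \<ge> 0" for i j by (simp add: w_def)
  have row: "(\<Sum>j\<in>UNIV. w i j) = 1" for i by (simp add: w_def unitary_row[OF Wu])
  have col: "(\<Sum>i\<in>UNIV. w i j) = 1" for j by (simp add: w_def unitary_col[OF Wu])
  note K = klein_spectral[of p q w, OF _ _ wpos row col U(4) V(4)]
  show "rel_ent \<rho> \<sigma> \<ge> 0" using K(1) U(3) V(3) re by simp
  show "rel_ent \<rho> \<sigma> = 0 \<longleftrightarrow> \<rho> = \<sigma>"
  proof
    assume "rel_ent \<rho> \<sigma> = 0"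
    then have h: "\<forall>i j. w i j \<noteq> 0 \<longrightarrow> p i = q j" using K(2) U(3) V(3) re by simp
    have "W ** rdiag q = rdiag p ** W"
    proof -
      have "W $ i $ j * complex_of_real (q j) = complex_of_real (p i) * W $ i $ j" for i j
      proof (cases "W $ i $ j = 0")
        case False then have "w i j \<noteq> 0" by (simp add: w_def)
        with h show ?thesis by (simp add: mult.commute)
      qed simp
      then show ?thesis by (simp add: vec_eq_iff mult_rdiag_entry rdiag_mult_entry)
    qed
    from intertwine[OF U(1) V(1) this[unfolded W_def]] show "\<rho> = \<sigma>" using U(2) V(2) by simp
  next
    assume "\<rho> = \<sigma>"
    then show "rel_ent \<rho> \<sigma> = 0" by (simp add: rel_ent_def trace_def)
  qed
qed




lemma sum_pair: "(\<Sum>r\<in>(UNIV::('a::finite\<times>'b::finite) set). f r) = (\<Sum>a\<in>UNIV. \<Sum>b\<in>UNIV. f (a,b))"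
  by (metis UNIV_Times_UNIV sum.cartesian_product case_prod_eta)

lemma kron_entry: "kron A B $ (a,b) $ (c,d) = A$a$c * B$b$d"
  by (simp add: kron_def)

lemma kron_mult: "kron A B ** kron C D = kron (A ** C) (B ** D)"
proof -
  have "(kron A B ** kron C D) $ (a,b) $ (c,d) = kron (A ** C) (B ** D) $ (a,b) $ (c,d)" for a b c d
  proof -
    have "(kron A B ** kron C D) $ (a,b) $ (c,d) = (\<Sum>k\<in>UNIV. \<Sum>l\<in>UNIV. (A$a$k * C$k$c) * (B$b$l * D$l$d))"
      by (simp add: matrix_matrix_mult_def sum_pair kron_entry mult_ac)
    also have "\<dots> = (\<Sum>k\<in>UNIV. A$a$k * C$k$c) * (\<Sum>l\<in>UNIV. B$b$l * D$l$d)"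
      by (simp add: sum_product)
    finally show ?thesis by (simp add: kron_entry matrix_matrix_mult_def)
  qed
  then show ?thesis by (simp add: vec_eq_iff)
qed

lemma adj_kron: "adj (kron A B) = kron (adj A) (adj B)"
  by (simp add: vec_eq_iff adj_def kron_def)

lemma kron_rdiag: "kron (rdiag a) (rdiag b) = rdiag (\<lambda>p. a (fst p) * b (snd p))"
  by (auto simp: vec_eq_iff kron_def rdiag_def prod_eq_iff)

lemma kron_mat1: "kron (mat 1 :: 'a::finite cmat) (mat 1 :: 'b::finite cmat) = mat 1"
  by (auto simp: vec_eq_iff kron_def mat_def prod_eq_iff)

lemma unitary_kron: "unitary U \<Longrightarrow> unitary V \<Longrightarrow> unitary (kron U V)"
  by (simp add: unitary_def adj_kron kron_mult kron_mat1)

lemma trace_kron: "trace (kron A B) = trace A * trace B"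
  by (simp add: trace_def sum_pair kron_entry sum_product)

lemma kron_diff_left: "kron (A - B) C = kron A C - kron B C"
  by (simp add: vec_eq_iff kron_def left_diff_distrib)
lemma kron_add_right: "kron A (B + C) = kron A B + kron A C"
  by (simp add: vec_eq_iff kron_def distrib_left)
lemma kron_add_left: "kron (A + B) C = kron A C + kron B C"
  by (simp add: vec_eq_iff kron_def distrib_right)

lemma ptrA_kron: "ptrA (kron A B) = (\<chi> j l. trace A * B$j$l)"
  by (simp add: vec_eq_iff ptrA_def kron_def trace_def sum_distrib_right)

lemma ptrA_kron1: "trace A = 1 \<Longrightarrow> ptrA (kron A B) = B"
  by (simp add: ptrA_kron vec_eq_iff)

lemma ptrB_kron1: "trace B = 1 \<Longrightarrow> ptrB (kron A B) = A"
proof -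
  assume "trace B = 1"
  then have "ptrB (kron A B) $ i $ k = A $ i $ k" for i k
    by (simp add: ptrB_def kron_def trace_def sum_distrib_left[symmetric])
  then show ?thesis by (simp add: vec_eq_iff)
qed

lemma trace_kron_I_right: "trace (kron X (mat 1) ** \<rho>) = trace (X ** ptrB \<rho>)"
proof -
  have "trace (kron X (mat 1) ** \<rho>) = (\<Sum>a\<in>UNIV. \<Sum>b\<in>UNIV. \<Sum>c\<in>UNIV. \<Sum>d\<in>UNIV.
        X$a$c * (if b = d then 1 else 0) * \<rho> $ (c,d) $ (a,b))"
    by (simp add: trace_def matrix_matrix_mult_def sum_pair kron_entry mat_def)
  also have "\<dots> = (\<Sum>a\<in>UNIV. \<Sum>b\<in>UNIV. \<Sum>c\<in>UNIV. X$a$c * \<rho> $ (c,b) $ (a,b))"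
    by (simp add: if_distrib if_distribR sum.delta cong: if_cong)
  also have "\<dots> = (\<Sum>a\<in>UNIV. \<Sum>c\<in>UNIV. \<Sum>b\<in>UNIV. X$a$c * \<rho> $ (c,b) $ (a,b))"
    by (intro sum.cong refl sum.swap)
  also have "\<dots> = trace (X ** ptrB \<rho>)"
    by (simp add: trace_def matrix_matrix_mult_def ptrB_def sum_distrib_left)
  finally show ?thesis .
qed

lemma trace_kron_I_left: "trace (kron (mat 1) Y ** \<rho>) = trace (Y ** ptrA \<rho>)"
proof -
  have "trace (kron (mat 1) Y ** \<rho>) = (\<Sum>a\<in>UNIV. \<Sum>b\<in>UNIV. \<Sum>c\<in>UNIV. \<Sum>d\<in>UNIV.
        (if a = c then 1 else 0) * Y$b$d * \<rho> $ (c,d) $ (a,b))"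
    by (simp add: trace_def matrix_matrix_mult_def sum_pair kron_entry mat_def)
  also have "\<dots> = (\<Sum>a\<in>UNIV. \<Sum>b\<in>UNIV. \<Sum>d\<in>UNIV. \<Sum>c\<in>UNIV.
        (if a = c then 1 else 0) * Y$b$d * \<rho> $ (c,d) $ (a,b))"
    by (rule sum.cong[OF refl], rule sum.cong[OF refl], rule sum.swap)
  also have "\<dots> = (\<Sum>a\<in>UNIV. \<Sum>b\<in>UNIV. \<Sum>d\<in>UNIV. Y$b$d * \<rho> $ (a,d) $ (a,b))"
    by (simp add: if_distrib if_distribR sum.delta cong: if_cong)
  also have "\<dots> = (\<Sum>b\<in>UNIV. \<Sum>d\<in>UNIV. \<Sum>a\<in>UNIV. Y$b$d * \<rho> $ (a,d) $ (a,b))"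
    by (subst sum.swap) (intro sum.cong refl sum.swap)
  also have "\<dots> = trace (Y ** ptrA \<rho>)"
    by (simp add: trace_def matrix_matrix_mult_def ptrA_def sum_distrib_left)
  finally show ?thesis .
qed




lemma qform_congr: "qform (adj S ** K ** S) x = qform K (S *v x)"
  by (simp add: qform_cinner matrix_vector_mul_assoc[symmetric] cinner_adj)

lemma pos_def_congr:
  assumes K: "pos_def K" and inj: "\<And>x. S *v x = 0 \<Longrightarrow> x = 0"
  shows "pos_def (adj S ** K ** S)"
proof -
  have hK: "hermitian K" using K by (simp add: pos_def_def)
  have h: "hermitian (adj S ** K ** S)"
    using hK by (simp add: hermitian_def adj_mult matrix_mul_assoc)
  show ?thesis unfolding pos_def_iff
  proof (intro conjI h allI impI)
    fix x :: "complex^'a" assume "x \<noteq> 0"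
    then have "S *v x \<noteq> 0" using inj by blast
    then show "Re (qform (adj S ** K ** S) x) > 0" using K by (simp add: qform_congr pos_def_iff)
  qed
qed

lemma qform_rdiag: "qform (rdiag d) y = complex_of_real (\<Sum>i\<in>UNIV. d i * (cmod (y$i))^2)"
proof -
  have "qform (rdiag d) y = (\<Sum>i\<in>UNIV. cnj (y$i) * complex_of_real (d i) * y$i)"
    by (simp add: qform_def rdiag_def if_distrib if_distribR cong: if_cong)
  also have "\<dots> = (\<Sum>i\<in>UNIV. complex_of_real (d i * (cmod (y$i))^2))"
    by (intro sum.cong refl) (simp add: complex_norm_square[symmetric] mult_ac del: of_real_power)
  finally show ?thesis by simp
qed

lemma decomp_pos_def:
  assumes U: "unitary U" and d: "\<And>i. d i > 0"
  shows "pos_def (U ** rdiag d ** adj U)"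
proof -
  have "pos_def (rdiag d)"
    unfolding pos_def_iff
  proof (intro conjI allI impI)
    show "hermitian (rdiag d)" by (simp add: hermitian_def)
    fix y :: "complex^'a" assume "y \<noteq> 0"
    then obtain i where i: "y$i \<noteq> 0" by (auto simp: vec_eq_iff)
    have "0 < d i * (cmod (y$i))^2" using d[of i] i by simp
    also have "\<dots> \<le> (\<Sum>i\<in>UNIV. d i * (cmod (y$i))^2)"
      by (rule member_le_sum) (auto intro: mult_nonneg_nonneg less_imp_le[OF d])
    finally show "Re (qform (rdiag d) y) > 0" by (simp add: qform_rdiag)
  qed
  moreover have "adj (adj U) ** rdiag d ** adj U = U ** rdiag d ** adj U" by simp
  moreover have "x = 0" if "adj U *v x = 0" for x
  proof -
    have "x = (U ** adj U) *v x" using unitary_UU[OF U] by simp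
    also have "\<dots> = 0" by (simp add: matrix_vector_mul_assoc[symmetric] that)
    finally show ?thesis .
  qed
  ultimately show ?thesis using pos_def_congr[of "rdiag d" "adj U"] by simp
qed

lemma kron_decomp: "kron (U ** rdiag a ** adj U) (V ** rdiag b ** adj V) =
   kron U V ** rdiag (\<lambda>p. a (fst p) * b (snd p)) ** adj (kron U V)"
  by (simp only: kron_rdiag[symmetric] adj_kron kron_mult)

lemma unitary_mat1: "unitary (mat 1)" by (simp add: unitary_def)

lemma pos_def_mat1: "pos_def (mat 1)"
  using decomp_pos_def[OF unitary_mat1, of "\<lambda>_. 1"] by (simp add: rdiag_one)

lemma pos_def_kron:
  assumes A: "pos_def A" and B: "pos_def B"
  shows "pos_def (kron A B)"
proof -
  obtain U a where U: "unitary U" "A = U ** rdiag a ** adj U" "\<forall>i. a i > 0" using pd_decomp[OF A] by blast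
  obtain V b where V: "unitary V" "B = V ** rdiag b ** adj V" "\<forall>i. b i > 0" using pd_decomp[OF B] by blast
  have "kron A B = kron U V ** rdiag (\<lambda>p. a (fst p) * b (snd p)) ** adj (kron U V)"
    unfolding U(2) V(2) by (rule kron_decomp)
  then show ?thesis using decomp_pos_def[OF unitary_kron[OF U(1) V(1)]] U(3) V(3) by simp
qed

lemma mfun_cong_pos:
  assumes A: "pos_def A" and fg: "\<And>x. x > 0 \<Longrightarrow> f x = g x"
  shows "mfun f A = mfun g A"
proof -
  obtain U a where U: "unitary U" "A = U ** rdiag a ** adj U" "\<forall>i. a i > 0" using pd_decomp[OF A] by blast
  have "f \<circ> a = g \<circ> a" using U(3) fg by auto
  then show ?thesis using mfun_eq[OF U(1,2)] by metis
qed

lemma mfun_kron: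
  assumes A: "pos_def A" and B: "pos_def B"
    and fgh: "\<And>x y. x > 0 \<Longrightarrow> y > 0 \<Longrightarrow> f (x * y) = g x * h y"
  shows "mfun f (kron A B) = kron (mfun g A) (mfun h B)"
proof -
  obtain U a where U: "unitary U" "A = U ** rdiag a ** adj U" "\<forall>i. a i > 0" using pd_decomp[OF A] by blast
  obtain V b where V: "unitary V" "B = V ** rdiag b ** adj V" "\<forall>i. b i > 0" using pd_decomp[OF B] by blast
  have kAB: "kron A B = kron U V ** rdiag (\<lambda>p. a (fst p) * b (snd p)) ** adj (kron U V)"
    unfolding U(2) V(2) by (rule kron_decomp)
  have "mfun f (kron A B) = kron U V ** rdiag (f \<circ> (\<lambda>p. a (fst p) * b (snd p))) ** adj (kron U V)"
    by (rule mfun_eq[OF unitary_kron[OF U(1) V(1)] kAB])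
  also have "f \<circ> (\<lambda>p. a (fst p) * b (snd p)) = (\<lambda>p. (g \<circ> a) (fst p) * (h \<circ> b) (snd p))"
    using U(3) V(3) fgh by auto
  finally show ?thesis
    by (simp add: mfun_eq[OF U(1,2)] mfun_eq[OF V(1,2)] kron_decomp o_def)
qed

lemma mlog_kron:
  assumes A: "pos_def A" and B: "pos_def B"
  shows "mlog (kron A B) = kron (mlog A) (mat 1) + kron (mat 1) (mlog B)"
proof -
  obtain U a where U: "unitary U" "A = U ** rdiag a ** adj U" "\<forall>i. a i > 0" using pd_decomp[OF A] by blast
  obtain V b where V: "unitary V" "B = V ** rdiag b ** adj V" "\<forall>i. b i > 0" using pd_decomp[OF B] by blast
  have kAB: "kron A B = kron U V ** rdiag (\<lambda>p. a (fst p) * b (snd p)) ** adj (kron U V)"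
    unfolding U(2) V(2) by (rule kron_decomp)
  have "mlog (kron A B) = kron U V ** rdiag (\<lambda>p. ln (a (fst p) * b (snd p))) ** adj (kron U V)"
    by (rule mlog_decomp[OF unitary_kron[OF U(1) V(1)] kAB])
  also have "(\<lambda>p. ln (a (fst p) * b (snd p))) = (\<lambda>p. (\<lambda>i. ln (a i)) (fst p) * (\<lambda>j. 1) (snd p) + (\<lambda>i. 1) (fst p) * (\<lambda>j. ln (b j)) (snd p))"
  proof (rule ext)
    fix p :: "'a \<times> 'b"
    have "a (fst p) > 0" "b (snd p) > 0" using U(3) V(3) by auto
    then show "ln (a (fst p) * b (snd p)) = ln (a (fst p)) * 1 + 1 * ln (b (snd p))" by (simp add: ln_mult)
  qed
  also have "rdiag \<dots> = kron (rdiag (\<lambda>i. ln (a i))) (rdiag (\<lambda>j. 1)) + kron (rdiag (\<lambda>i. 1)) (rdiag (\<lambda>j. ln (b j)))"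
    by (simp add: kron_rdiag[symmetric] vec_eq_iff rdiag_def kron_def)
  finally show ?thesis
    using unitary_UU[OF U(1)] unitary_UU[OF V(1)]
    by (simp add: mlog_decomp[OF U(1,2)] mlog_decomp[OF V(1,2)] kron_mult adj_kron matrix_add_ldistrib
        mm_add_left rdiag_one)
qed




lemma hermitian_entry: "hermitian A \<Longrightarrow> cnj (A $ j $ i) = A $ i $ j"
  unfolding hermitian_def adj_def by (metis vec_lambda_beta)

lemma trace_ptrA: "trace (ptrA \<rho>) = trace \<rho>"
  by (simp add: trace_def ptrA_def sum_pair) (rule sum.swap)

lemma trace_ptrB: "trace (ptrB \<rho>) = trace \<rho>"
  by (simp add: trace_def ptrB_def sum_pair)

lemma hermitian_ptrA: "hermitian \<rho> \<Longrightarrow> hermitian (ptrA \<rho>)"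
  unfolding hermitian_def[of "ptrA \<rho>"]
  by (simp add: vec_eq_iff adj_def ptrA_def hermitian_entry)

lemma hermitian_ptrB: "hermitian \<rho> \<Longrightarrow> hermitian (ptrB \<rho>)"
  unfolding hermitian_def[of "ptrB \<rho>"]
  by (simp add: vec_eq_iff adj_def ptrB_def hermitian_entry)

lemma ifz_l: "(if P then x else 0) * y = (if P then x * y else (0::complex))" by simp
lemma ifz_r: "x * (if P then y else 0) = (if P then x * y else (0::complex))" by simp
lemma sum_ifc: "(\<Sum>x\<in>A. if P then f x else (0::complex)) = (if P then sum f A else 0)" by simp
lemma sum_ifeq: "(\<Sum>x\<in>(UNIV::'i::finite set). if x = i then f x else (0::complex)) = f i" by simp
lemma sum_ifeq': "(\<Sum>x\<in>(UNIV::'i::finite set). if i = x then f x else (0::complex)) = f i" by simp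

lemma qform_ptrA: "qform (ptrA \<rho>) z = (\<Sum>i\<in>UNIV. qform \<rho> (\<chi> p. if fst p = i then z $ snd p else 0))"
proof -
  have "qform (ptrA \<rho>) z = (\<Sum>j\<in>UNIV. \<Sum>l\<in>UNIV. \<Sum>i\<in>UNIV. cnj (z$j) * \<rho> $ (i,j) $ (i,l) * z$l)"
    by (simp add: qform_def ptrA_def sum_distrib_left sum_distrib_right)
  also have "\<dots> = (\<Sum>j\<in>UNIV. \<Sum>i\<in>UNIV. \<Sum>l\<in>UNIV. cnj (z$j) * \<rho> $ (i,j) $ (i,l) * z$l)"
    by (rule sum.cong[OF refl], rule sum.swap)
  also have "\<dots> = (\<Sum>i\<in>UNIV. \<Sum>j\<in>UNIV. \<Sum>l\<in>UNIV. cnj (z$j) * \<rho> $ (i,j) $ (i,l) * z$l)"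
    by (rule sum.swap)
  also have "\<dots> = (\<Sum>i\<in>UNIV. qform \<rho> (\<chi> p. if fst p = i then z $ snd p else 0))"
  proof (rule sum.cong[OF refl])
    fix i
    have "qform \<rho> (\<chi> p. if fst p = i then z $ snd p else 0) =
      (\<Sum>a\<in>UNIV. \<Sum>b\<in>UNIV. \<Sum>c\<in>UNIV. \<Sum>d\<in>UNIV.
        (if a = i then cnj (z$b) else 0) * \<rho> $ (a,b) $ (c,d) * (if c = i then z$d else 0))"
      unfolding qform_def sum_pair by (simp only: vec_lambda_beta fst_conv snd_conv if_distrib[of cnj] complex_cnj_zero)
    also have "\<dots> = (\<Sum>j\<in>UNIV. \<Sum>l\<in>UNIV. cnj (z$j) * \<rho> $ (i,j) $ (i,l) * z$l)"
      by (simp only: ifz_l ifz_r sum_ifc sum_ifeq sum_ifeq' mult.assoc)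
    finally show "(\<Sum>j\<in>UNIV. \<Sum>l\<in>UNIV. cnj (z$j) * \<rho> $ (i,j) $ (i,l) * z$l) =
      qform \<rho> (\<chi> p. if fst p = i then z $ snd p else 0)" by simp
  qed
  finally show ?thesis .
qed

lemma qform_ptrB: "qform (ptrB \<rho>) z = (\<Sum>j\<in>UNIV. qform \<rho> (\<chi> p. if snd p = j then z $ fst p else 0))"
proof -
  have "qform (ptrB \<rho>) z = (\<Sum>i\<in>UNIV. \<Sum>k\<in>UNIV. \<Sum>j\<in>UNIV. cnj (z$i) * \<rho> $ (i,j) $ (k,j) * z$k)"
    by (simp add: qform_def ptrB_def sum_distrib_left sum_distrib_right)
  also have "\<dots> = (\<Sum>i\<in>UNIV. \<Sum>j\<in>UNIV. \<Sum>k\<in>UNIV. cnj (z$i) * \<rho> $ (i,j) $ (k,j) * z$k)"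
    by (rule sum.cong[OF refl], rule sum.swap)
  also have "\<dots> = (\<Sum>j\<in>UNIV. \<Sum>i\<in>UNIV. \<Sum>k\<in>UNIV. cnj (z$i) * \<rho> $ (i,j) $ (k,j) * z$k)"
    by (rule sum.swap)
  also have "\<dots> = (\<Sum>j\<in>UNIV. qform \<rho> (\<chi> p. if snd p = j then z $ fst p else 0))"
  proof (rule sum.cong[OF refl])
    fix j
    have "qform \<rho> (\<chi> p. if snd p = j then z $ fst p else 0) =
      (\<Sum>a\<in>UNIV. \<Sum>b\<in>UNIV. \<Sum>c\<in>UNIV. \<Sum>d\<in>UNIV.
        (if b = j then cnj (z$a) else 0) * \<rho> $ (a,b) $ (c,d) * (if d = j then z$c else 0))"
      unfolding qform_def sum_pair by (simp only: vec_lambda_beta fst_conv snd_conv if_distrib[of cnj] complex_cnj_zero)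
    also have "\<dots> = (\<Sum>a\<in>UNIV. \<Sum>c\<in>UNIV. \<Sum>b\<in>UNIV. \<Sum>d\<in>UNIV.
        (if b = j then cnj (z$a) else 0) * \<rho> $ (a,b) $ (c,d) * (if d = j then z$c else 0))"
      by (rule sum.cong[OF refl], rule sum.swap)
    also have "\<dots> = (\<Sum>i\<in>UNIV. \<Sum>k\<in>UNIV. cnj (z$i) * \<rho> $ (i,j) $ (k,j) * z$k)"
      by (simp only: ifz_l ifz_r sum_ifc sum_ifeq sum_ifeq' mult.assoc)
    finally show "(\<Sum>i\<in>UNIV. \<Sum>k\<in>UNIV. cnj (z$i) * \<rho> $ (i,j) $ (k,j) * z$k) =
      qform \<rho> (\<chi> p. if snd p = j then z $ fst p else 0)" by simp
  qed
  finally show ?thesis .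
qed

lemma sum_pos_Re:
  fixes f :: "'i::finite \<Rightarrow> complex"
  assumes "\<And>i. Re (f i) > 0"
  shows "Re (sum f UNIV) > 0"
proof -
  obtain i0 :: 'i where True by blast
  have "0 < Re (f i0)" by (rule assms)
  also have "\<dots> \<le> (\<Sum>i\<in>UNIV. Re (f i))" by (rule member_le_sum) (auto intro: less_imp_le assms)
  finally show ?thesis by (simp add: Re_sum)
qed

lemma pos_def_ptrA: "pos_def \<rho> \<Longrightarrow> pos_def (ptrA \<rho>)"
proof -
  assume r: "pos_def \<rho>"
  show ?thesis unfolding pos_def_iff
  proof (intro conjI allI impI)
    show "hermitian (ptrA \<rho>)" using r by (simp add: pos_def_def hermitian_ptrA)
    fix z :: "complex^'b" assume "z \<noteq> 0"
    then obtain b where b: "z $ b \<noteq> 0" by (auto simp: vec_eq_iff)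
    have "Re (qform \<rho> (\<chi> p. if fst p = i then z $ snd p else 0)) > 0" for i :: 'a
    proof -
      have "(\<chi> p. if fst p = i then z $ snd p else 0) $ (i, b) \<noteq> 0" using b by simp
      then have "(\<chi> p. if fst p = i then z $ snd p else 0) \<noteq> 0" by (metis zero_index)
      then show ?thesis using r by (simp add: pos_def_iff)
    qed
    then show "Re (qform (ptrA \<rho>) z) > 0" unfolding qform_ptrA by (rule sum_pos_Re)
  qed
qed

lemma pos_def_ptrB: "pos_def \<rho> \<Longrightarrow> pos_def (ptrB \<rho>)"
proof -
  assume r: "pos_def \<rho>"
  show ?thesis unfolding pos_def_iff
  proof (intro conjI allI impI)
    show "hermitian (ptrB \<rho>)" using r by (simp add: pos_def_def hermitian_ptrB)
    fix z :: "complex^'a" assume "z \<noteq> 0"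
    then obtain a where a: "z $ a \<noteq> 0" by (auto simp: vec_eq_iff)
    have "Re (qform \<rho> (\<chi> p. if snd p = j then z $ fst p else 0)) > 0" for j :: 'b
    proof -
      have "(\<chi> p. if snd p = j then z $ fst p else 0) $ (a, j) \<noteq> 0" using a by simp
      then have "(\<chi> p. if snd p = j then z $ fst p else 0) \<noteq> 0" by (metis zero_index)
      then show ?thesis using r by (simp add: pos_def_iff)
    qed
    then show "Re (qform (ptrB \<rho>) z) > 0" unfolding qform_ptrB by (rule sum_pos_Re)
  qed
qed

lemma frs_ptrA: "full_rank_state \<rho> \<Longrightarrow> full_rank_state (ptrA \<rho>)"
  by (simp add: full_rank_state_def pos_def_ptrA trace_ptrA)
lemma frs_ptrB: "full_rank_state \<rho> \<Longrightarrow> full_rank_state (ptrB \<rho>)"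
  by (simp add: full_rank_state_def pos_def_ptrB trace_ptrB)
lemma frs_kron: "full_rank_state A \<Longrightarrow> full_rank_state B \<Longrightarrow> full_rank_state (kron A B)"
  by (simp add: full_rank_state_def pos_def_kron trace_kron)




lemma mfun_one_pos:
  assumes A: "pos_def A" and f: "\<And>x. x > 0 \<Longrightarrow> f x = 1"
  shows "mfun f A = mat 1"
proof -
  have "mfun f A = mfun (\<lambda>_. 1) A" by (rule mfun_cong_pos[OF A]) (simp add: f)
  also have "\<dots> = mat 1" using A unfolding pos_def_def by (intro mfun_one) auto
  finally show ?thesis .
qed

lemma mfun_id_pos:
  assumes A: "pos_def A" and f: "\<And>x. x > 0 \<Longrightarrow> f x = x"
  shows "mfun f A = A"
proof -
  have "mfun f A = mfun (\<lambda>x. x) A" by (rule mfun_cong_pos[OF A]) (simp add: f)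
  also have "\<dots> = A" using A unfolding pos_def_def by (intro mfun_id) auto
  finally show ?thesis .
qed

lemma msqrt_sq: "pos_def A \<Longrightarrow> msqrt A ** msqrt A = A"
proof -
  assume A: "pos_def A"
  have h: "hermitian A" using A by (simp add: pos_def_def)
  have "msqrt A ** msqrt A = mfun (\<lambda>x. sqrt x * sqrt x) A" by (simp add: msqrt_def mfun_mult[OF h])
  also have "\<dots> = A" by (rule mfun_id_pos[OF A]) simp
  finally show ?thesis .
qed

lemma minvsqrt_msqrt: "pos_def A \<Longrightarrow> minvsqrt A ** msqrt A = mat 1"
proof -
  assume A: "pos_def A"
  have h: "hermitian A" using A by (simp add: pos_def_def)
  have "minvsqrt A ** msqrt A = mfun (\<lambda>x. 1 / sqrt x * sqrt x) A" by (simp add: msqrt_def minvsqrt_def mfun_mult[OF h])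
  also have "\<dots> = mat 1" by (rule mfun_one_pos[OF A]) simp
  finally show ?thesis .
qed

lemma msqrt_minvsqrt: "pos_def A \<Longrightarrow> msqrt A ** minvsqrt A = mat 1"
proof -
  assume A: "pos_def A"
  have h: "hermitian A" using A by (simp add: pos_def_def)
  have "msqrt A ** minvsqrt A = mfun (\<lambda>x. sqrt x * (1 / sqrt x)) A" by (simp add: msqrt_def minvsqrt_def mfun_mult[OF h])
  also have "\<dots> = mat 1" by (rule mfun_one_pos[OF A]) simp
  finally show ?thesis .
qed

lemma minvsqrt_sandwich: "pos_def A \<Longrightarrow> minvsqrt A ** A ** minvsqrt A = mat 1"
proof -
  assume A: "pos_def A"
  have h: "hermitian A" using A by (simp add: pos_def_def)
  have "minvsqrt A ** A ** minvsqrt A = mfun (\<lambda>x. 1 / sqrt x) A ** mfun (\<lambda>x. x) A ** mfun (\<lambda>x. 1 / sqrt x) A"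
    by (simp add: minvsqrt_def mfun_id[OF h])
  also have "\<dots> = mfun (\<lambda>x. 1 / sqrt x * x * (1 / sqrt x)) A"
    by (simp add: mfun_mult[OF h])
  also have "\<dots> = mat 1" by (rule mfun_one_pos[OF A]) (simp add: field_simps)
  finally show ?thesis .
qed

lemma hermitian_msqrt: "hermitian A \<Longrightarrow> hermitian (msqrt A)"
  by (simp add: msqrt_def hermitian_mfun)
lemma hermitian_minvsqrt: "hermitian A \<Longrightarrow> hermitian (minvsqrt A)"
  by (simp add: minvsqrt_def hermitian_mfun)

lemma left_inv_inj: "B ** S = mat 1 \<Longrightarrow> S *v x = 0 \<Longrightarrow> x = 0"
proof -
  assume "B ** S = mat 1" "S *v x = 0"
  then have "x = (B ** S) *v x" by simp
  also have "\<dots> = 0" by (simp add: matrix_vector_mul_assoc[symmetric] \<open>S *v x = 0\<close>)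
  finally show ?thesis .
qed

lemma herm_adj: "hermitian S \<Longrightarrow> adj S = S" by (simp add: hermitian_def)

theorem Estar_frs:
  assumes s: "full_rank_state \<sigma>" and r: "full_rank_state \<rho>"
  shows "full_rank_state (Estar \<sigma> \<rho>)"
proof -
  define S where "S = msqrt \<sigma>"
  define N where "N = minvsqrt (ptrA \<sigma>)"
  define M where "M = N ** ptrA \<rho> ** N"
  define K :: "('a \<times> 'b) cmat" where "K = kron (mat 1) M"
  have sp: "pos_def \<sigma>" and rp: "pos_def \<rho>" using s r by (auto simp: full_rank_state_def)
  have sBp: "pos_def (ptrA \<sigma>)" and rBp: "pos_def (ptrA \<rho>)" using sp rp by (auto intro: pos_def_ptrA)
  have hS: "hermitian S" unfolding S_def using sp by (simp add: pos_def_def hermitian_msqrt)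
  have hN: "hermitian N" unfolding N_def using sBp by (simp add: pos_def_def hermitian_minvsqrt)
  have Mp: "pos_def M"
  proof -
    have "pos_def (adj N ** ptrA \<rho> ** N)"
      by (rule pos_def_congr[OF rBp left_inv_inj[OF msqrt_minvsqrt[OF sBp]]]) (simp add: N_def)
    then show ?thesis by (simp add: M_def herm_adj[OF hN])
  qed
  have Kp: "pos_def K" unfolding K_def by (rule pos_def_kron[OF pos_def_mat1 Mp])
  have E: "Estar \<sigma> \<rho> = adj S ** K ** S"
    by (simp add: Estar_def S_def N_def M_def K_def herm_adj[OF hS[unfolded S_def]])
  have Ep: "pos_def (Estar \<sigma> \<rho>)" unfolding E
    by (rule pos_def_congr[OF Kp left_inv_inj[OF minvsqrt_msqrt[OF sp]]]) (simp add: S_def)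
  have "trace (Estar \<sigma> \<rho>) = trace (S ** (K ** S))" by (simp add: E herm_adj[OF hS] matrix_mul_assoc)
  also have "\<dots> = trace ((K ** S) ** S)" by (rule trace_mul_sym)
  also have "\<dots> = trace (K ** \<sigma>)" by (simp add: matrix_mul_assoc[symmetric] S_def msqrt_sq[OF sp])
  also have "\<dots> = trace (M ** ptrA \<sigma>)" by (simp add: K_def trace_kron_I_left)
  also have "\<dots> = trace (N ** (ptrA \<rho> ** N ** ptrA \<sigma>))" by (simp add: M_def matrix_mul_assoc)
  also have "\<dots> = trace ((ptrA \<rho> ** N ** ptrA \<sigma>) ** N)" by (rule trace_mul_sym)
  also have "\<dots> = trace (ptrA \<rho> ** (N ** ptrA \<sigma> ** N))" by (simp add: matrix_mul_assoc)
  also have "\<dots> = trace \<rho>" by (simp add: N_def minvsqrt_sandwich[OF sBp] trace_ptrA)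
  finally show ?thesis using Ep r by (simp add: full_rank_state_def)
qed

lemma msqrt_kron: "pos_def A \<Longrightarrow> pos_def B \<Longrightarrow> msqrt (kron A B) = kron (msqrt A) (msqrt B)"
  unfolding msqrt_def by (rule mfun_kron) (auto simp: real_sqrt_mult)

theorem Estar_prod:
  assumes a: "full_rank_state \<sigma>A" and b: "full_rank_state \<sigma>B"
  shows "Estar (kron \<sigma>A \<sigma>B) \<rho> = kron \<sigma>A (ptrA \<rho>)"
proof -
  have ap: "pos_def \<sigma>A" and bp: "pos_def \<sigma>B" and ta: "trace \<sigma>A = 1"
    using a b by (auto simp: full_rank_state_def)
  have pA: "ptrA (kron \<sigma>A \<sigma>B) = \<sigma>B" by (rule ptrA_kron1[OF ta])
  define SA where "SA = msqrt \<sigma>A"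
  define SB where "SB = msqrt \<sigma>B"
  define N where "N = minvsqrt \<sigma>B"
  have "Estar (kron \<sigma>A \<sigma>B) \<rho> = kron SA SB ** kron (mat 1) (N ** ptrA \<rho> ** N) ** kron SA SB"
    by (simp add: Estar_def pA msqrt_kron[OF ap bp] SA_def SB_def N_def)
  also have "\<dots> = kron (SA ** SA) ((SB ** N) ** ptrA \<rho> ** (N ** SB))"
    by (simp add: kron_mult matrix_mul_assoc)
  also have "\<dots> = kron \<sigma>A (ptrA \<rho>)"
    by (simp add: SA_def SB_def N_def msqrt_sq[OF ap] msqrt_minvsqrt[OF bp] minvsqrt_msqrt[OF bp])
  finally show ?thesis .
qed




lemma trace_log_kron:
  assumes X: "pos_def X" and Y: "pos_def Y"
  shows "trace (\<rho> ** mlog (kron X Y)) = trace (ptrB \<rho> ** mlog X) + trace (ptrA \<rho> ** mlog Y)"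
proof -
  have "trace (\<rho> ** mlog (kron X Y)) = trace (\<rho> ** kron (mlog X) (mat 1)) + trace (\<rho> ** kron (mat 1) (mlog Y))"
    by (simp add: mlog_kron[OF X Y] matrix_add_ldistrib trace_add)
  also have "trace (\<rho> ** kron (mlog X) (mat 1)) = trace (kron (mlog X) (mat 1) ** \<rho>)" by (rule trace_mul_sym)
  also have "\<dots> = trace (mlog X ** ptrB \<rho>)" by (rule trace_kron_I_right)
  also have "\<dots> = trace (ptrB \<rho> ** mlog X)" by (rule trace_mul_sym)
  also have "trace (\<rho> ** kron (mat 1) (mlog Y)) = trace (kron (mat 1) (mlog Y) ** \<rho>)" by (rule trace_mul_sym)
  also have "\<dots> = trace (mlog Y ** ptrA \<rho>)" by (rule trace_kron_I_left)
  also have "\<dots> = trace (ptrA \<rho> ** mlog Y)" by (rule trace_mul_sym)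
  finally show ?thesis .
qed

definition TT :: "'n::finite cmat \<Rightarrow> 'n cmat \<Rightarrow> real" where
  "TT \<rho> X = Re (trace (\<rho> ** mlog X))"

lemma rel_ent_TT: "rel_ent \<rho> \<sigma> = TT \<rho> \<rho> - TT \<rho> \<sigma>"
  by (simp add: rel_ent_def TT_def mm_diff_right trace_sub)

lemma TT_kron: "pos_def X \<Longrightarrow> pos_def Y \<Longrightarrow> TT \<rho> (kron X Y) = TT (ptrB \<rho>) X + TT (ptrA \<rho>) Y"
  by (simp add: TT_def trace_log_kron)

theorem part2:
  assumes s: "full_rank_state \<sigma>" and r: "full_rank_state \<rho>"
  shows "DEA \<rho> \<sigma> \<ge> 0 \<and> (DEA \<rho> \<sigma> = 0 \<longleftrightarrow> \<rho> = Estar \<sigma> \<rho>)"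
  using klein[OF r Estar_frs[OF s r]] by (simp add: DEA_def)

theorem part3:
  assumes a: "full_rank_state \<sigma>A" and b: "full_rank_state \<sigma>B" and r: "full_rank_state \<rho>"
  shows "DEA \<rho> (kron \<sigma>A \<sigma>B) \<ge> rel_ent (ptrB \<rho>) \<sigma>A"
proof -
  have rA: "full_rank_state (ptrB \<rho>)" and rB: "full_rank_state (ptrA \<rho>)" using r by (auto intro: frs_ptrA frs_ptrB)
  have pd: "pos_def \<sigma>A" "pos_def (ptrA \<rho>)" "pos_def (ptrB \<rho>)"
    using a rA rB by (auto simp: full_rank_state_def)
  have "DEA \<rho> (kron \<sigma>A \<sigma>B) = rel_ent \<rho> (kron \<sigma>A (ptrA \<rho>))" by (simp add: DEA_def Estar_prod[OF a b])
  also have "\<dots> = rel_ent \<rho> (kron (ptrB \<rho>) (ptrA \<rho>)) + rel_ent (ptrB \<rho>) \<sigma>A"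
    by (simp add: rel_ent_TT TT_kron pd)
  finally show ?thesis using klein(1)[OF r frs_kron[OF rA rB]] by simp
qed

theorem part31:
  assumes a: "full_rank_state \<sigma>A" and b: "full_rank_state \<sigma>B"
    and ra: "full_rank_state \<rho>A" and rb: "full_rank_state \<rho>B"
  shows "DEA (kron \<rho>A \<rho>B) (kron \<sigma>A \<sigma>B) = rel_ent \<rho>A \<sigma>A"
proof -
  have pd: "pos_def \<sigma>A" "pos_def \<rho>A" "pos_def \<rho>B" and tr: "trace \<rho>A = 1" "trace \<rho>B = 1"
    using a ra rb by (auto simp: full_rank_state_def)
  have pA: "ptrA (kron \<rho>A \<rho>B) = \<rho>B" by (rule ptrA_kron1[OF tr(1)])
  have pB: "ptrB (kron \<rho>A \<rho>B) = \<rho>A" by (rule ptrB_kron1[OF tr(2)])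
  show ?thesis
    by (simp add: DEA_def Estar_prod[OF a b] pA rel_ent_TT TT_kron pd pB)
qed




lemma tendsto_mmult:
  assumes "(f \<longlongrightarrow> A) F" "(g \<longlongrightarrow> B) F"
  shows "((\<lambda>x. f x ** g x :: complex^'n::finite^'m::finite) \<longlongrightarrow> A ** B) F"
  unfolding matrix_matrix_mult_def
  by (intro tendsto_vec_lambda tendsto_sum tendsto_mult tendsto_vec_nth assms)

lemma tendsto_adj:
  assumes "(f \<longlongrightarrow> A) F"
  shows "((\<lambda>x. adj (f x)) \<longlongrightarrow> adj A) F"
  unfolding adj_def
  by (intro tendsto_vec_lambda tendsto_cnj tendsto_vec_nth assms)

lemma tendsto_rdiag:
  assumes "\<And>i. ((\<lambda>x. d x i) \<longlongrightarrow> e i) F"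
  shows "((\<lambda>x. rdiag (d x)) \<longlongrightarrow> rdiag e) F"
  unfolding rdiag_def
proof (intro tendsto_vec_lambda)
  fix i j
  show "((\<lambda>x. if i = j then complex_of_real (d x i) else 0) \<longlongrightarrow> (if i = j then complex_of_real (e i) else 0)) F"
    by (cases "i = j") (auto intro: tendsto_of_real assms)
qed

lemma tendsto_kron:
  assumes "(f \<longlongrightarrow> A) F" "(g \<longlongrightarrow> B) F"
  shows "((\<lambda>x. kron (f x) (g x)) \<longlongrightarrow> kron A B) F"
  unfolding kron_def
  by (intro tendsto_vec_lambda tendsto_mult tendsto_vec_nth assms)

lemma tendsto_ptrA:
  assumes "(f \<longlongrightarrow> A) F"
  shows "((\<lambda>x. ptrA (f x)) \<longlongrightarrow> ptrA A) F"
  unfolding ptrA_def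
  by (intro tendsto_vec_lambda tendsto_sum tendsto_vec_nth assms)

lemma tendsto_trace:
  fixes f :: "'x \<Rightarrow> 'n::finite cmat"
  assumes "(f \<longlongrightarrow> A) F"
  shows "((\<lambda>x. trace (f x)) \<longlongrightarrow> trace A) F"
  unfolding trace_def
  by (intro tendsto_sum tendsto_vec_nth assms)

lemma tendsto_qform:
  assumes "(f \<longlongrightarrow> A) F" "(g \<longlongrightarrow> v) F"
  shows "((\<lambda>x. qform (f x) (g x)) \<longlongrightarrow> qform A v) F"
  unfolding qform_def
  by (intro tendsto_sum tendsto_mult tendsto_cnj tendsto_vec_nth assms)

lemma tendsto_column:
  assumes "(f \<longlongrightarrow> A) F"
  shows "((\<lambda>x. column i (f x)) \<longlongrightarrow> column i A) F"
  unfolding column_def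
  by (intro tendsto_vec_lambda tendsto_vec_nth assms)

lemma norm_unitary: "unitary (U::'n::finite cmat) \<Longrightarrow> norm U = sqrt (real CARD('n))"
proof -
  assume U: "unitary U"
  have "norm U = sqrt (\<Sum>i\<in>UNIV. (norm (U$i))^2)" by (simp add: norm_vec_def L2_set_def)
  also have "(\<Sum>i\<in>UNIV. (norm (U$i))^2) = (\<Sum>i\<in>(UNIV::'n set). 1)"
    by (intro sum.cong refl) (simp add: norm_vec_sq unitary_row[OF U])
  finally show ?thesis by simp
qed

lemma compact_unitary: "compact {U::'n::finite cmat. unitary U}"
proof -
  have "bounded {U::'n::finite cmat. unitary U}"
    unfolding bounded_iff by (rule exI[of _ "sqrt (real CARD('n))"]) (simp add: norm_unitary)
  moreover have "closed {U::'n::finite cmat. unitary U}"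
  proof -
    have c1: "continuous_on UNIV (\<lambda>U::'n cmat. U ** adj U)"
      unfolding matrix_matrix_mult_def adj_def by (intro continuous_intros continuous_on_vec_lambda)
    have c2: "continuous_on UNIV (\<lambda>U::'n cmat. adj U ** U)"
      unfolding matrix_matrix_mult_def adj_def by (intro continuous_intros continuous_on_vec_lambda)
    have "{U::'n cmat. unitary U} = {U. U ** adj U = mat 1} \<inter> {U. adj U ** U = mat 1}"
      by (auto simp: unitary_def)
    then show ?thesis using closed_Collect_eq[OF c1 continuous_on_const] closed_Collect_eq[OF c2 continuous_on_const]
      by (simp add: closed_Int)
  qed
  ultimately show ?thesis by (simp add: compact_eq_bounded_closed)
qed

lemma mfun_tendsto_seq:
  fixes X :: "nat \<Rightarrow> 'n::finite cmat"
  assumes f: "continuous_on {0<..} f"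
    and X: "X \<longlonglongrightarrow> A" and Xp: "\<And>n. pos_def (X n)" and Ap: "pos_def A"
  shows "(\<lambda>n. mfun f (X n)) \<longlonglongrightarrow> mfun f A"
proof (rule ccontr)
  assume "\<not> (\<lambda>n. mfun f (X n)) \<longlonglongrightarrow> mfun f A"
  then obtain e where "e > 0" and "infinite {n. \<not> dist (mfun f (X n)) (mfun f A) < e}"
    by (auto simp: tendsto_iff not_eventually INFM_iff_infinite cofinite_eq_sequentially[symmetric])
  then obtain s :: "nat \<Rightarrow> nat" where s: "\<And>n. \<not> dist (mfun f (X (s n))) (mfun f A) < e" and "strict_mono s"
    using enumerate_in_set enumerate_mono by (fastforce simp: strict_mono_def)
  have "\<forall>n. \<exists>U d. unitary U \<and> X n = U ** rdiag d ** adj U \<and> (\<forall>i. d i > 0)"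
    using pd_decomp[OF Xp] by blast
  then obtain U where "\<forall>n. \<exists>d. unitary (U n) \<and> X n = U n ** rdiag d ** adj (U n) \<and> (\<forall>i. d i > 0)"
    by (rule choice[THEN exE]) blast
  then obtain d where "\<forall>n. unitary (U n) \<and> X n = U n ** rdiag (d n) ** adj (U n) \<and> (\<forall>i. d n i > 0)"
    by (rule choice[THEN exE]) blast
  then have Ud: "\<And>n. unitary (U n)" "\<And>n. X n = U n ** rdiag (d n) ** adj (U n)" "\<And>n i. d n i > 0"
    by auto
  have "seq_compact {U::'n cmat. unitary U}" by (rule compact_imp_seq_compact[OF compact_unitary])
  then have "\<exists>l\<in>{U. unitary U}. \<exists>r. strict_mono r \<and> ((U \<circ> s) \<circ> r) \<longlonglongrightarrow> l"
    unfolding seq_compact_def using Ud(1) by simp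
  then obtain U0 r where U0: "unitary U0" and r: "strict_mono r" and Ur: "(U \<circ> (s \<circ> r)) \<longlonglongrightarrow> U0"
    by (auto simp: o_assoc)
  define t where "t = s \<circ> r"
  have t: "strict_mono t" unfolding t_def using \<open>strict_mono s\<close> r by (rule strict_mono_o)
  have Ut: "(\<lambda>n. U (t n)) \<longlonglongrightarrow> U0" using Ur by (simp add: t_def comp_def)
  have Xt: "(\<lambda>n. X (t n)) \<longlonglongrightarrow> A" using X t by (rule LIMSEQ_subseq_LIMSEQ[unfolded comp_def])
  define d0 where "d0 i = Re (qform A (column i U0))" for i
  have dn: "d n i = Re (qform (X n) (column i (U n)))" for n i
  proof -
    have "complex_of_real (d n i) = (adj (U n) ** X n ** U n) $ i $ i"
      using adjU_A_U[OF Ud(1) Ud(2)] by (simp add: rdiag_def)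
    also have "\<dots> = qform (X n) (column i (U n))" by (rule qform_col)
    finally show ?thesis by (metis Re_complex_of_real)
  qed
  have dt: "(\<lambda>n. d (t n) i) \<longlonglongrightarrow> d0 i" for i
    unfolding dn d0_def by (intro tendsto_Re tendsto_qform Xt tendsto_column Ut)
  have d0pos: "d0 i > 0" for i
  proof -
    have "(adj U0 ** U0) $ i $ i = 1" using unitary_UU[OF U0] by (simp add: mat_def)
    then have s1: "(\<Sum>k\<in>UNIV. cnj (U0$k$i) * U0$k$i) = 1" by (simp add: matrix_matrix_mult_def adj_def)
    have "column i U0 \<noteq> 0"
    proof
      assume "column i U0 = 0"
      then have "U0$k$i = 0" for k by (metis column_def vec_lambda_beta zero_index)
      then show False using s1 by simp
    qed
    then show ?thesis using Ap by (simp add: d0_def pos_def_iff)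
  qed
  have "(\<lambda>n. U (t n) ** rdiag (d (t n)) ** adj (U (t n))) \<longlonglongrightarrow> U0 ** rdiag d0 ** adj U0"
    by (intro tendsto_mmult tendsto_adj tendsto_rdiag Ut dt)
  then have "(\<lambda>n. X (t n)) \<longlonglongrightarrow> U0 ** rdiag d0 ** adj U0" using Ud(2) by simp
  then have A0: "A = U0 ** rdiag d0 ** adj U0" using Xt LIMSEQ_unique by blast
  have fc: "isCont f (d0 i)" for i
    using f d0pos[of i] by (simp add: continuous_on_eq_continuous_at)
  have "(\<lambda>n. U (t n) ** rdiag (f \<circ> d (t n)) ** adj (U (t n))) \<longlonglongrightarrow> U0 ** rdiag (f \<circ> d0) ** adj U0"
    unfolding comp_def
    by (intro tendsto_mmult tendsto_adj tendsto_rdiag Ut isCont_tendsto_compose[OF fc dt])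
  then have "(\<lambda>n. mfun f (X (t n))) \<longlonglongrightarrow> mfun f A"
    by (simp add: mfun_eq[OF Ud(1,2)] mfun_eq[OF U0 A0])
  then have "eventually (\<lambda>n. dist (mfun f (X (t n))) (mfun f A) < e) sequentially"
    using \<open>e > 0\<close> by (rule tendstoD)
  then obtain N where "\<forall>n\<ge>N. dist (mfun f (X (t n))) (mfun f A) < e" by (auto simp: eventually_sequentially)
  then have "dist (mfun f (X (s (r N)))) (mfun f A) < e" by (simp add: t_def)
  then show False using s[of "r N"] by simp
qed

lemma mfun_continuous:
  assumes f: "continuous_on {0<..} f"
  shows "continuous_on {A::'n::finite cmat. pos_def A} (mfun f)"
  unfolding continuous_on_sequentially comp_def
  using mfun_tendsto_seq[OF f] by auto




lemma mlog_continuous: "continuous_on {A::'n::finite cmat. pos_def A} mlog"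
proof -
  have "continuous_on {0<..} (ln :: real \<Rightarrow> real)"
    by (intro continuous_intros) auto
  then show ?thesis unfolding mlog_def[abs_def] by (rule mfun_continuous)
qed

lemma Estar_continuous: "continuous_on UNIV (Estar \<sigma>)"
  unfolding continuous_on_def Estar_def
  by (intro ballI tendsto_mmult tendsto_kron tendsto_ptrA tendsto_const tendsto_ident_at)

theorem part1:
  assumes s: "full_rank_state \<sigma>"
  shows "continuous_on {\<rho>. full_rank_state \<rho>} (\<lambda>\<rho>. DEA \<rho> \<sigma>)"
proof -
  let ?S = "{\<rho>. full_rank_state \<rho>}"
  have sub: "?S \<subseteq> {A. pos_def A}" by (auto simp: full_rank_state_def)
  have c1: "continuous_on ?S mlog" by (rule continuous_on_subset[OF mlog_continuous sub])
  have c2: "continuous_on ?S (\<lambda>\<rho>. mlog (Estar \<sigma> \<rho>))"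
  proof (rule continuous_on_compose2[OF mlog_continuous])
    show "continuous_on ?S (Estar \<sigma>)" by (rule continuous_on_subset[OF Estar_continuous]) simp
    show "Estar \<sigma> ` ?S \<subseteq> {A. pos_def A}"
      using Estar_frs[OF s] by (auto simp: full_rank_state_def)
  qed
  show ?thesis
    unfolding continuous_on_def DEA_def rel_ent_def
  proof
    fix x :: "('a \<times> 'b) cmat" assume x: "x \<in> ?S"
    have t1: "(mlog \<longlongrightarrow> mlog x) (at x within ?S)" using c1 x unfolding continuous_on_def by blast
    have t2: "((\<lambda>\<rho>. mlog (Estar \<sigma> \<rho>)) \<longlongrightarrow> mlog (Estar \<sigma> x)) (at x within ?S)"
      using c2 x unfolding continuous_on_def by blast
    show "((\<lambda>\<rho>. Re (trace (\<rho> ** (mlog \<rho> - mlog (Estar \<sigma> \<rho>))))) \<longlongrightarrow>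
          Re (trace (x ** (mlog x - mlog (Estar \<sigma> x))))) (at x within ?S)"
      by (intro tendsto_Re tendsto_trace tendsto_mmult tendsto_diff tendsto_ident_at t1 t2)
  qed
qed

theorem mainTheorem2:
  fixes \<sigma> :: "('a::finite \<times> 'b::finite) cmat"
    and \<sigma>A :: "'a cmat" and \<sigma>B :: "'b cmat"
  shows
    "(full_rank_state \<sigma> \<longrightarrow>
       continuous_on {\<rho>. full_rank_state \<rho>} (\<lambda>\<rho>. DEA \<rho> \<sigma>))
    \<and> (full_rank_state \<sigma> \<longrightarrow> (\<forall>\<rho>. full_rank_state \<rho> \<longrightarrow>
       DEA \<rho> \<sigma> \<ge> 0 \<and> (DEA \<rho> \<sigma> = 0 \<longleftrightarrow> \<rho> = Estar \<sigma> \<rho>)))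
    \<and> (full_rank_state \<sigma>A \<longrightarrow> full_rank_state \<sigma>B \<longrightarrow> (\<forall>\<rho>. full_rank_state \<rho> \<longrightarrow>
       DEA \<rho> (kron \<sigma>A \<sigma>B) \<ge> rel_ent (ptrB \<rho>) \<sigma>A))
    \<and> (full_rank_state \<sigma>A \<longrightarrow> full_rank_state \<sigma>B \<longrightarrow>
       (\<forall>\<rho>A \<rho>B. full_rank_state \<rho>A \<longrightarrow> full_rank_state \<rho>B \<longrightarrow>
       DEA (kron \<rho>A \<rho>B) (kron \<sigma>A \<sigma>B) = rel_ent \<rho>A \<sigma>A))"
proof (intro conjI impI allI)
  show "full_rank_state \<sigma> \<Longrightarrow> continuous_on {\<rho>. full_rank_state \<rho>} (\<lambda>\<rho>. DEA \<rho> \<sigma>)"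
    by (rule part1)
  show "full_rank_state \<sigma> \<Longrightarrow> full_rank_state \<rho> \<Longrightarrow> DEA \<rho> \<sigma> \<ge> 0" for \<rho>
    using part2 by blast
  show "full_rank_state \<sigma> \<Longrightarrow> full_rank_state \<rho> \<Longrightarrow> DEA \<rho> \<sigma> = 0 \<longleftrightarrow> \<rho> = Estar \<sigma> \<rho>" for \<rho>
    using part2 by blast
  show "full_rank_state \<sigma>A \<Longrightarrow> full_rank_state \<sigma>B \<Longrightarrow> full_rank_state \<rho> \<Longrightarrow>
       DEA \<rho> (kron \<sigma>A \<sigma>B) \<ge> rel_ent (ptrB \<rho>) \<sigma>A" for \<rho>
    by (rule part3)
  show "full_rank_state \<sigma>A \<Longrightarrow> full_rank_state \<sigma>B \<Longrightarrow> full_rank_state \<rho>A \<Longrightarrow> full_rank_state \<rho>B \<Longrightarrow>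
       DEA (kron \<rho>A \<rho>B) (kron \<sigma>A \<sigma>B) = rel_ent \<rho>A \<sigma>A" for \<rho>A :: "'a cmat" and \<rho>B :: "'b cmat"
    by (rule part31)
qed



end
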